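(* Let $\mathcal{A}$ be a weight graded algebra. \begin{itemize} \item[(i)] On the level of underlying ns collections, we have \[ \mathcal{U}_{\min}(\mathcal{A})\cong \mathcal{A}^+ . \] \item[(ii)] The underlying ns collection of $\mathcal{U}_{\max}(\mathcal{A})$ has a basis formed by the cosets of tree monomials for which the leftmost input of each internal vertex is a leaf. \end{itemize}
   Context: Work over a field $\Bbbk$. A weight graded algebra $\mathcal{A}$ is a connected ($\mathcal{A}(0)\cong\Bbbk$) monoid in nonsymmetric (ns) collections for the tensor product $(\mathcal{P}\otimes\mathcal{Q})(n)=\bigoplus_{i+j=n}\mathcal{P}(i)\otimes\mathcal{Q}(j)$. Ns operads are reduced and connected. For a ns collection $\mathcal{A}$, its shift up is $\mathcal{A}^+(0)=0$, $\mathcal{A}^+(n)=\mathcal{A}(n-1)$ for $n\ge1$. The max-envelope operad $\mathcal{U}_{\max}(\mathcal{A})$ is the quotient of the free ns operad $\mathcal{T}(\mathcal{A}^+)$ by the ideal generated by $1-\mathrm{id}$ (identifying $\mathcal{A}(0)=\mathcal{A}^+(1)$) and all elements $a_1\circ_1 a_2-a_1\cdot a_2$; the min-envelope operad $\mathcal{U}_{\min}(\mathcal{A})$ is the quotient of $\mathcal{T}(\mathcal{A}^+)$ by the ideal generated by $1-\mathrm{id}$, all $a_1\circ_1 a_2-a_1\cdot a_2$, and all $a_1\circ_i a_2$ for $i\ge 2$. Here $a_1\in\mathcal{A}(k-1)=\mathcal{A}^+(k)$, $a_2\in\mathcal{A}(l-1)=\mathcal{A}^+(l)$, and $a_1\cdot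 a_2\in\mathcal{A}(k+l-2)=\mathcal{A}^+(k+l-1)$. Tree monomials refer to the basis of $\mathcal{T}(\mathcal{A}^+)$ (with the generator $1$ eliminated) obtained from a chosen basis of $\mathcal{A}$: planar trees whose internal vertices with $k$ inputs are decorated by basis elements of $\mathcal{A}(k-1)$. *)

theory Defs
  imports Main
begin

(* A weight graded algebra A over a field 'k is given by a
   homogeneous basis (type 'b) with weight function w, unit basis element one,
   and structure constants mult a b (a finitely supported function 'b => 'k).
   Vectors are finitely supported functions. *)

definition supp :: "('a \<Rightarrow> 'k::zero) \<Rightarrow> 'a set" where
  "supp f = {x. f x \<noteq> 0}"

definition delta :: "'a \<Rightarrow> 'a \<Rightarrow> 'k::{zero,one}" where
  "delta a = (\<lambda>x. if x = a then 1 else 0)"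

definition mulv :: "('b \<Rightarrow> 'b \<Rightarrow> 'b \<Rightarrow> 'k::field) \<Rightarrow> ('b \<Rightarrow> 'k) \<Rightarrow> ('b \<Rightarrow> 'k) \<Rightarrow> 'b \<Rightarrow> 'k" where
  "mulv mult f g = (\<lambda>z. \<Sum>a\<in>supp f. \<Sum>b\<in>supp g. f a * g b * mult a b z)"

(* weight graded algebra: connected monoid in ns collections, presented via a
   homogeneous basis containing the unit *)
definition wg_algebra :: "('b \<Rightarrow> nat) \<Rightarrow> 'b \<Rightarrow> ('b \<Rightarrow> 'b \<Rightarrow> 'b \<Rightarrow> 'k::field) \<Rightarrow> bool" where
  "wg_algebra w one mult \<longleftrightarrow>
     (\<forall>a b. finite (supp (mult a b))) \<and>
     (\<forall>a b z. mult a b z \<noteq> 0 \<longrightarrow> w z = w a + w b) \<and>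
     (\<forall>b. w b = 0 \<longleftrightarrow> b = one) \<and>
     (\<forall>b. mult one b = delta b \<and> mult b one = delta b) \<and>
     (\<forall>a b c. mulv mult (mult a b) (delta c) = mulv mult (delta a) (mult b c))"

definition Acomp :: "('b \<Rightarrow> nat) \<Rightarrow> nat \<Rightarrow> ('b \<Rightarrow> 'k::zero) set" where
  "Acomp w n = {f. finite (supp f) \<and> (\<forall>b\<in>supp f. w b = n)}"

definition Aplus :: "('b \<Rightarrow> nat) \<Rightarrow> nat \<Rightarrow> ('b \<Rightarrow> 'k::zero) set" where
  "Aplus w n = (if n = 0 then {\<lambda>_. 0} else Acomp w (n - 1))"

(* planar trees; Node b ts has inputs ts (left to right) *)
datatype 'b tree = Leaf | Node 'b "'b tree list"

fun ar :: "'b tree \<Rightarrow> nat" where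
  "ar Leaf = 1"
| "ar (Node b ts) = sum_list (map ar ts)"

(* tree monomials of T(A^+) with the generator 1 eliminated *)
fun wf_tree :: "('b \<Rightarrow> nat) \<Rightarrow> 'b \<Rightarrow> 'b tree \<Rightarrow> bool" where
  "wf_tree w one Leaf = True"
| "wf_tree w one (Node b ts) =
     (b \<noteq> one \<and> length ts = Suc (w b) \<and> (\<forall>t\<in>set ts. wf_tree w one t))"

(* graft i s u : insert u into the i-th (0-based) leaf of s, i.e. s \<circ>_(i+1) u *)
fun graft :: "nat \<Rightarrow> 'b tree \<Rightarrow> 'b tree \<Rightarrow> 'b tree"
and graft_list :: "nat \<Rightarrow> 'b tree list \<Rightarrow> 'b tree \<Rightarrow> 'b tree list" where
  "graft i Leaf u = (if i = 0 then u else Leaf)"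
| "graft i (Node b ts) u = Node b (graft_list i ts u)"
| "graft_list i [] u = []"
| "graft_list i (t # ts) u =
     (if i < ar t then graft i t u # ts else t # graft_list (i - ar t) ts u)"

definition Tcomp :: "('b \<Rightarrow> nat) \<Rightarrow> 'b \<Rightarrow> nat \<Rightarrow> ('b tree \<Rightarrow> 'k::zero) set" where
  "Tcomp w one n = {x. finite (supp x) \<and> (\<forall>t\<in>supp x. wf_tree w one t \<and> ar t = n)}"

(* bilinear extension of the partial composition: lcomp i x y = x \<circ>_(i+1) y *)
definition lcomp :: "nat \<Rightarrow> ('b tree \<Rightarrow> 'k::field) \<Rightarrow> ('b tree \<Rightarrow> 'k) \<Rightarrow> 'b tree \<Rightarrow> 'k" where
  "lcomp i x y = (\<lambda>t. \<Sum>s\<in>supp x. \<Sum>u\<in>supp y. if graft i s u = t then x s * y u else 0)"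

(* generator of T(A^+) attached to a basis element; 1 is identified with id *)
definition gen :: "('b \<Rightarrow> nat) \<Rightarrow> 'b \<Rightarrow> 'b \<Rightarrow> 'b tree" where
  "gen w one b = (if b = one then Leaf else Node b (replicate (Suc (w b)) Leaf))"

definition genv :: "('b \<Rightarrow> nat) \<Rightarrow> 'b \<Rightarrow> ('b \<Rightarrow> 'k::field) \<Rightarrow> 'b tree \<Rightarrow> 'k" where
  "genv w one f = (\<lambda>t. \<Sum>b\<in>supp f. f b * delta (gen w one b) t)"

inductive op_ideal :: "('b \<Rightarrow> nat) \<Rightarrow> 'b \<Rightarrow> (nat \<Rightarrow> ('b tree \<Rightarrow> 'k::field) \<Rightarrow> bool)
    \<Rightarrow> nat \<Rightarrow> ('b tree \<Rightarrow> 'k) \<Rightarrow> bool"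
  for w one R where
  gen: "R n x \<Longrightarrow> x \<in> Tcomp w one n \<Longrightarrow> op_ideal w one R n x"
| zero: "op_ideal w one R n (\<lambda>_. 0)"
| add: "op_ideal w one R n x \<Longrightarrow> op_ideal w one R n y \<Longrightarrow> op_ideal w one R n (\<lambda>t. x t + y t)"
| smult: "op_ideal w one R n x \<Longrightarrow> op_ideal w one R n (\<lambda>t. c * x t)"
| left: "op_ideal w one R n x \<Longrightarrow> y \<in> Tcomp w one m \<Longrightarrow> i < n
          \<Longrightarrow> op_ideal w one R (n + m - 1) (lcomp i x y)"
| right: "op_ideal w one R m x \<Longrightarrow> y \<in> Tcomp w one n \<Longrightarrow> i < n
          \<Longrightarrow> op_ideal w one R (n + m - 1) (lcomp i y x)"

(* relations a1 \<circ>_1 a2 - a1 \<cdot> a2, a1 \<in> A(p) = A^+(p+1), a2 \<in> A(q) = A^+(q+1) *)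
definition R_max :: "('b \<Rightarrow> nat) \<Rightarrow> 'b \<Rightarrow> ('b \<Rightarrow> 'b \<Rightarrow> 'b \<Rightarrow> 'k::field)
    \<Rightarrow> nat \<Rightarrow> ('b tree \<Rightarrow> 'k) \<Rightarrow> bool" where
  "R_max w one mult n x \<longleftrightarrow>
     (\<exists>p q a1 a2. a1 \<in> Acomp w p \<and> a2 \<in> Acomp w q \<and> n = p + q + 1 \<and>
        x = (\<lambda>t. lcomp 0 (genv w one a1) (genv w one a2) t
                  - genv w one (mulv mult a1 a2) t))"

(* additionally a1 \<circ>_i a2 for i \<ge> 2 (0-based index i \<ge> 1), a2 of positive weight *)
definition R_min :: "('b \<Rightarrow> nat) \<Rightarrow> 'b \<Rightarrow> ('b \<Rightarrow> 'b \<Rightarrow> 'b \<Rightarrow> 'k::field)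
    \<Rightarrow> nat \<Rightarrow> ('b tree \<Rightarrow> 'k) \<Rightarrow> bool" where
  "R_min w one mult n x \<longleftrightarrow>
     R_max w one mult n x \<or>
     (\<exists>p q a1 a2 i. a1 \<in> Acomp w p \<and> a2 \<in> Acomp w q \<and> 1 \<le> q \<and> 1 \<le> i \<and> i \<le> p \<and>
        n = p + q + 1 \<and> x = lcomp i (genv w one a1) (genv w one a2))"

fun left_leaf :: "'b tree \<Rightarrow> bool" where
  "left_leaf Leaf = True"
| "left_leaf (Node b ts) = (ts \<noteq> [] \<and> hd ts = Leaf \<and> (\<forall>t\<in>set ts. left_leaf t))"

(* the cosets of the elements of S form a basis of V / I *)
definition coset_basis :: "('a \<Rightarrow> 'k::field) set \<Rightarrow> (('a \<Rightarrow> 'k) \<Rightarrow> bool) \<Rightarrow> 'a set \<Rightarrow> bool" where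
  "coset_basis V I S \<longleftrightarrow>
     (\<forall>x\<in>V. supp x \<subseteq> S \<longrightarrow> I x \<longrightarrow> x = (\<lambda>_. 0)) \<and>
     (\<forall>x\<in>V. \<exists>y\<in>V. supp y \<subseteq> S \<and> I (\<lambda>t. x t - y t))"

(* V / I is isomorphic to W, via a linear surjection V \<rightarrow> W with kernel I *)
definition quotient_iso :: "('a \<Rightarrow> 'k::field) set \<Rightarrow> (('a \<Rightarrow> 'k) \<Rightarrow> bool) \<Rightarrow> ('c \<Rightarrow> 'k) set \<Rightarrow> bool" where
  "quotient_iso V I W \<longleftrightarrow>
     (\<exists>\<phi>. (\<forall>x\<in>V. \<forall>y\<in>V. \<phi> (\<lambda>t. x t + y t) = (\<lambda>b. \<phi> x b + \<phi> y b)) \<and>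
          (\<forall>c. \<forall>x\<in>V. \<phi> (\<lambda>t. c * x t) = (\<lambda>b. c * \<phi> x b)) \<and>
          \<phi> ` V = W \<and>
          (\<forall>x\<in>V. \<phi> x = (\<lambda>_. 0) \<longleftrightarrow> I x))"

end

theory Submission
  imports Defs
begin

definition lext :: "('a \<Rightarrow> 'c \<Rightarrow> 'k::field) \<Rightarrow> ('a \<Rightarrow> 'k) \<Rightarrow> 'c \<Rightarrow> 'k" where
  "lext F x = (\<lambda>z. \<Sum>a\<in>supp x. x a * F a z)"

lemma supp_delta[simp]: "supp (delta a :: 'a \<Rightarrow> 'k::field) = {a}"
  by (auto simp: supp_def delta_def)

lemma fin_delta[simp]: "finite (supp (delta a :: 'a \<Rightarrow> 'k::field))" by simp

lemma supp_zero[simp]: "supp (\<lambda>_. 0) = {}" by (auto simp: supp_def)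

lemma lext_alt: "finite S \<Longrightarrow> supp x \<subseteq> S \<Longrightarrow> lext F x = (\<lambda>z. \<Sum>a\<in>S. x a * F a z)"
  unfolding lext_def
  by (rule ext, rule sum.mono_neutral_left) (auto simp: supp_def)

lemma lext_apply: "lext F x z = (\<Sum>a\<in>supp x. x a * F a z)"
  by (simp add: lext_def)

lemma lext_delta[simp]: "lext F (delta a :: 'a \<Rightarrow> 'k::field) = F a"
  by (rule ext) (simp add: lext_def, simp add: delta_def)

lemma lext_zero[simp]: "lext F (\<lambda>_. 0) = (\<lambda>_. 0)"
  by (simp add: lext_def)

lemma lext_zeroF[simp]: "lext (\<lambda>a _. 0) x = (\<lambda>_. 0)"
  by (simp add: lext_def)

lemma lext_cong: "(\<And>a. a \<in> supp x \<Longrightarrow> F a = G a) \<Longrightarrow> lext F x = lext G x"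
  by (auto simp: lext_def intro!: ext sum.cong)

lemma supp_lext: "supp (lext F x) \<subseteq> (\<Union>a\<in>supp x. supp (F a))"
proof
  fix z assume "z \<in> supp (lext F x)"
  then have "(\<Sum>a\<in>supp x. x a * F a z) \<noteq> 0" by (simp add: supp_def lext_def)
  then obtain a where "a \<in> supp x" "x a * F a z \<noteq> 0" by (meson sum.neutral)
  then show "z \<in> (\<Union>a\<in>supp x. supp (F a))" by (auto simp: supp_def)
qed

lemma fin_lext: "finite (supp x) \<Longrightarrow> (\<And>a. a \<in> supp x \<Longrightarrow> finite (supp (F a))) \<Longrightarrow> finite (supp (lext F x))"
  by (rule finite_subset[OF supp_lext]) auto

lemma lext_add: "finite (supp x) \<Longrightarrow> finite (supp y) \<Longrightarrow>
   lext F (\<lambda>z. x z + y z) = (\<lambda>z. lext F x z + lext F y z)"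
proof -
  assume fx: "finite (supp x)" and fy: "finite (supp y)"
  let ?S = "supp x \<union> supp y"
  have s: "supp (\<lambda>z. x z + y z) \<subseteq> ?S" by (auto simp: supp_def)
  show ?thesis
    by (simp add: lext_alt[OF _ s] lext_alt[of ?S x] lext_alt[of ?S y] fx fy
       distrib_right sum.distrib)
qed

lemma lext_diff: "finite (supp x) \<Longrightarrow> finite (supp y) \<Longrightarrow>
   lext F (\<lambda>z. x z - y z) = (\<lambda>z. lext F x z - lext F y z)"
proof -
  assume fx: "finite (supp x)" and fy: "finite (supp y)"
  let ?S = "supp x \<union> supp y"
  have s: "supp (\<lambda>z. x z - y z) \<subseteq> ?S" by (auto simp: supp_def)
  show ?thesis
    by (simp add: lext_alt[OF _ s] lext_alt[of ?S x] lext_alt[of ?S y] fx fy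
       left_diff_distrib sum_subtractf)
qed

lemma lext_smult: "lext F (\<lambda>z. c * x z) = (\<lambda>z. c * lext F x z)"
proof (cases "c = 0")
  case True then show ?thesis by (simp add: lext_def)
next
  case False
  then have "supp (\<lambda>z. c * x z) = supp x" by (auto simp: supp_def)
  then show ?thesis by (simp add: lext_def sum_distrib_left mult.assoc fun_eq_iff)
qed

lemma lext_addF: "lext (\<lambda>a z. F a z + G a z) x = (\<lambda>z. lext F x z + lext G x z)"
  by (simp add: lext_def distrib_left sum.distrib)

lemma lext_diffF: "lext (\<lambda>a z. F a z - G a z) x = (\<lambda>z. lext F x z - lext G x z)"
  by (simp add: lext_def right_diff_distrib sum_subtractf)

lemma lext_smultF: "lext (\<lambda>a z. c * F a z) x = (\<lambda>z. c * lext F x z)"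
  by (simp add: lext_def sum_distrib_left algebra_simps)

lemma lext_multF: "lext (\<lambda>a z. F a z * c) x = (\<lambda>z. lext F x z * c)"
  by (rule ext) (simp add: lext_def sum_distrib_right mult.assoc)

lemma lext_swap: "finite (supp x) \<Longrightarrow> finite (supp y) \<Longrightarrow>
   lext (\<lambda>a. lext (H a) y) x = lext (\<lambda>b. lext (\<lambda>a. H a b) x) y"
  by (rule ext) (simp add: lext_def sum_distrib_left sum.swap[of _ "supp x"] algebra_simps)

lemma lext_assoc:
  assumes fx: "finite (supp x)" and fG: "\<And>a. a \<in> supp x \<Longrightarrow> finite (supp (G a))"
  shows "lext F (lext G x) = lext (\<lambda>a. lext F (G a)) x"
proof (rule ext)
  fix z
  let ?S = "\<Union>a\<in>supp x. supp (G a)"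
  have fS: "finite ?S" using fx fG by auto
  have "lext F (lext G x) z = (\<Sum>b\<in>?S. lext G x b * F b z)"
    by (simp add: lext_alt[OF fS supp_lext])
  also have "\<dots> = (\<Sum>b\<in>?S. \<Sum>a\<in>supp x. x a * G a b * F b z)"
    by (simp add: lext_def sum_distrib_right)
  also have "\<dots> = (\<Sum>a\<in>supp x. x a * (\<Sum>b\<in>?S. G a b * F b z))"
    by (subst sum.swap) (simp add: sum_distrib_left mult.assoc)
  also have "\<dots> = (\<Sum>a\<in>supp x. x a * lext F (G a) z)"
  proof (rule sum.cong[OF refl])
    fix a assume "a \<in> supp x"
    then have "supp (G a) \<subseteq> ?S" by auto
    then show "x a * (\<Sum>b\<in>?S. G a b * F b z) = x a * lext F (G a) z"
      by (simp add: lext_alt[OF fS])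
  qed
  finally show "lext F (lext G x) z = lext (\<lambda>a. lext F (G a)) x z"
    by (simp add: lext_def)
qed

lemma lext_delta_id: "finite (supp x) \<Longrightarrow> lext delta x = x"
proof (rule ext)
  fix z assume f: "finite (supp x)"
  show "lext delta x z = x z"
  proof (cases "z \<in> supp x")
    case True
    have "(\<Sum>a\<in>supp x. x a * delta a z) = (\<Sum>a\<in>supp x. if a = z then x z else 0)"
      by (rule sum.cong) (auto simp: delta_def)
    then show ?thesis using True f by (simp add: lext_def)
  next
    case False
    then show ?thesis by (auto simp: lext_def delta_def supp_def intro!: sum.neutral)
  qed
qed

lemma supp_add: "supp (\<lambda>z. x z + y z) \<subseteq> supp x \<union> supp (y :: 'a \<Rightarrow> 'k::field)" by (auto simp: supp_def)
lemma supp_diff: "supp (\<lambda>z. x z - y z) \<subseteq> supp x \<union> supp (y :: 'a \<Rightarrow> 'k::field)" by (auto simp: supp_def)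
lemma supp_smult: "supp (\<lambda>z. c * x z) \<subseteq> supp (x :: 'a \<Rightarrow> 'k::field)" by (auto simp: supp_def)

lemma fin_add[intro]: "finite (supp x) \<Longrightarrow> finite (supp y) \<Longrightarrow> finite (supp (\<lambda>z. x z + (y z :: 'k::field)))"
  by (rule finite_subset[OF supp_add]) auto
lemma fin_diff[intro]: "finite (supp x) \<Longrightarrow> finite (supp y) \<Longrightarrow> finite (supp (\<lambda>z. x z - (y z :: 'k::field)))"
  by (rule finite_subset[OF supp_diff]) auto
lemma fin_smult[intro]: "finite (supp x) \<Longrightarrow> finite (supp (\<lambda>z. c * (x z :: 'k::field)))"
  by (rule finite_subset[OF supp_smult]) auto

fun prodv :: "('a \<Rightarrow> 'k::field) list \<Rightarrow> 'a list \<Rightarrow> 'k" where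
  "prodv [] = (\<lambda>l. if l = [] then 1 else 0)"
| "prodv (X # Xs) = (\<lambda>l. case l of [] \<Rightarrow> 0 | a # as \<Rightarrow> X a * prodv Xs as)"

lemma supp_prodv_Nil[simp]: "supp (prodv [] :: 'a list \<Rightarrow> 'k::field) = {[]}"
  by (auto simp: supp_def)
declare prodv.simps(1)[simp del]

lemma supp_prodv_Cons: "supp (prodv (X # Xs)) \<subseteq> (\<lambda>(a, as). a # as) ` (supp X \<times> supp (prodv Xs))"
proof
  fix l assume "l \<in> supp (prodv (X # Xs))"
  then show "l \<in> (\<lambda>(a, as). a # as) ` (supp X \<times> supp (prodv Xs))"
    by (cases l) (auto simp: supp_def)
qed

lemma fin_prodv: "(\<And>X. X \<in> set Xs \<Longrightarrow> finite (supp X)) \<Longrightarrow> finite (supp (prodv Xs))"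
proof (induction Xs)
  case Nil then show ?case by simp
next
  case (Cons X Xs)
  then show ?case by (intro finite_subset[OF supp_prodv_Cons]) auto
qed

lemma supp_prodv: "l \<in> supp (prodv Xs) \<Longrightarrow> list_all2 (\<lambda>a X. a \<in> supp X) l Xs"
proof (induction Xs arbitrary: l)
  case Nil then show ?case by (simp add: supp_def prodv.simps(1) split: if_splits)
next
  case (Cons X Xs)
  then show ?case by (cases l) (auto simp: supp_def)
qed

lemma prodv_delta: "prodv (map delta ls) = (delta ls :: 'a list \<Rightarrow> 'k::field)"
proof (induction ls)
  case Nil then show ?case by (auto simp: delta_def prodv.simps(1))
next
  case (Cons a ls)
  then show ?case by (auto simp: delta_def fun_eq_iff split: list.splits)
qed

lemma prodv_lin: "prodv (A @ lext G V # B) = lext (\<lambda>t. prodv (A @ G t # B)) V"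
proof (induction A)
  case Nil
  show ?case
    by (rule ext) (auto simp: lext_def sum_distrib_right sum_distrib_left algebra_simps split: list.splits)
next
  case (Cons X A)
  show ?case
    by (simp only: append_Cons prodv.simps(2) Cons.IH) (rule ext, auto simp: lext_def sum_distrib_left algebra_simps split: list.splits)
qed

lemma G_app1: "i < sum_list (map ar xs) \<Longrightarrow> graft_list i (xs @ ys) u = graft_list i xs u @ ys"
  by (induction xs arbitrary: i) auto

lemma G_app2: "sum_list (map ar xs) \<le> i \<Longrightarrow>
   graft_list i (xs @ ys) u = xs @ graft_list (i - sum_list (map ar xs)) ys u"
  by (induction xs arbitrary: i) (auto simp: diff_diff_add)

lemma G_leaf: "graft_list (sum_list (map ar pre)) (pre @ Leaf # post) u = pre @ u # post"
  by (simp add: G_app2)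

lemma G_at: "j < ar t \<Longrightarrow> graft_list (sum_list (map ar pre) + j) (pre @ t # post) u = pre @ graft j t u # post"
  by (simp add: G_app2)

lemma graft_split: "i < sum_list (map ar ts) \<Longrightarrow>
  \<exists>pre t post j. ts = pre @ t # post \<and> j < ar t \<and> i = sum_list (map ar pre) + j"
proof (induction ts arbitrary: i)
  case Nil then show ?case by simp
next
  case (Cons t ts)
  show ?case
  proof (cases "i < ar t")
    case True
    then show ?thesis by (rule_tac x="[]" in exI) auto
  next
    case False
    then have "i - ar t < sum_list (map ar ts)" using Cons.prems by auto
    from Cons.IH[OF this] obtain pre t' post j where
      "ts = pre @ t' # post" "j < ar t'" "i - ar t = sum_list (map ar pre) + j" by blast
    then show ?thesis using False
      by (rule_tac x="t # pre" in exI) auto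
  qed
qed

lemma length_graft_list[simp]: "length (graft_list i ts u) = length ts"
  by (induction ts arbitrary: i) auto

lemma graft_Leaf_arg0: "u = Leaf \<Longrightarrow> graft i s u = s" and graft_list_Leaf_arg0: "u = Leaf \<Longrightarrow> graft_list i ts u = ts"
  by (induction i s u and i ts u rule: graft_graft_list.induct) auto

lemma graft_Leaf_arg[simp]: "graft i s Leaf = s" and graft_list_Leaf_arg[simp]: "graft_list i ts Leaf = ts"
  by (simp_all add: graft_Leaf_arg0 graft_list_Leaf_arg0)

lemma mult_if01: "(a::'k::field) * (if P then 1 else 0) = (if P then a else 0)" by simp

lemma ar_graft: "i < ar s \<Longrightarrow> ar (graft i s u) + 1 = ar s + ar u"
  and ar_graft_list: "i < sum_list (map ar ts) \<Longrightarrow>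
     sum_list (map ar (graft_list i ts u)) + 1 = sum_list (map ar ts) + ar u"
  by (induction i s u and i ts u rule: graft_graft_list.induct) (auto split: if_splits)

fun nv :: "'b tree \<Rightarrow> nat" where
  "nv Leaf = 0"
| "nv (Node b ts) = Suc (sum_list (map nv ts))"

lemma nv_graft: "i < ar s \<Longrightarrow> nv (graft i s u) = nv s + nv u"
  and nv_graft_list: "i < sum_list (map ar ts) \<Longrightarrow>
     sum_list (map nv (graft_list i ts u)) = sum_list (map nv ts) + nv u"
  by (induction i s u and i ts u rule: graft_graft_list.induct) (auto split: if_splits)

lemma graft_not_Leaf: "u \<noteq> Leaf \<Longrightarrow> i < ar s \<Longrightarrow> graft i s u \<noteq> Leaf"
  by (cases s) auto

lemma lcomp_lext: "lcomp i x y = lext (\<lambda>s. lext (\<lambda>u. delta (graft i s u)) y) x"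
  by (rule ext) (auto simp: lcomp_def lext_def delta_def sum_distrib_left intro!: sum.cong)

lemma lcomp_delta: "lcomp i (delta s) (delta u) = delta (graft i s u)"
  by (simp add: lcomp_lext)

lemma mulv_lext: "mulv mult f g = lext (\<lambda>a. lext (\<lambda>b. mult a b) g) f"
  by (rule ext) (simp add: mulv_def lext_def sum_distrib_left mult.assoc)

lemma sum_list_ge_length: "(\<And>t. t \<in> set ts \<Longrightarrow> 1 \<le> f t) \<Longrightarrow> length ts \<le> sum_list (map f ts)"
  by (induction ts) (auto, fastforce)

locale wga =
  fixes w :: "'b \<Rightarrow> nat" and one :: 'b and mult :: "'b \<Rightarrow> 'b \<Rightarrow> 'b \<Rightarrow> 'k::field"
  assumes wg: "wg_algebra w one mult"
begin

lemma fin_mult[simp]: "finite (supp (mult a b))"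
  using wg by (simp add: wg_algebra_def)

lemma mult_w: "z \<in> supp (mult a b) \<Longrightarrow> w z = w a + w b"
  using wg by (auto simp: wg_algebra_def supp_def)

lemma w0: "w b = 0 \<longleftrightarrow> b = one"
  using wg by (simp add: wg_algebra_def)

lemma mult_one_left[simp]: "mult one b = delta b" and mult_one_right[simp]: "mult b one = delta b"
  using wg by (simp_all add: wg_algebra_def)

lemma massoc: "lext (\<lambda>d. mult d c) (mult a b) = lext (mult a) (mult b c)"
proof -
  have "mulv mult (mult a b) (delta c) = mulv mult (delta a) (mult b c)"
    using wg by (simp add: wg_algebra_def)
  then show ?thesis by (simp add: mulv_lext)
qed

lemma mult_supp_not_one: "b \<noteq> one \<Longrightarrow> d \<in> supp (mult b c) \<Longrightarrow> d \<noteq> one"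
  by (metis add_is_0 mult_w w0)

abbreviation wf where "wf \<equiv> wf_tree w one"
abbreviation T :: "nat \<Rightarrow> ('b tree \<Rightarrow> 'k) set" where "T \<equiv> Tcomp w one"

lemma wf_ar: "wf t \<Longrightarrow> 1 \<le> ar t"
proof (induction t)
  case Leaf then show ?case by simp
next
  case (Node b ts)
  then have "length ts \<le> sum_list (map ar ts)" by (intro sum_list_ge_length) auto
  then show ?case using Node.prems by simp
qed

lemma wf_ar_Node: "wf (Node b ts) \<Longrightarrow> 2 \<le> ar (Node b ts)"
proof -
  assume h: "wf (Node b ts)"
  then have "length ts \<le> sum_list (map ar ts)" by (intro sum_list_ge_length wf_ar) auto
  moreover have "w b \<noteq> 0" using h w0 by auto
  ultimately show ?thesis using h by simp
qed

lemma wf_ar1: "wf t \<Longrightarrow> ar t = 1 \<longleftrightarrow> t = Leaf"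
  using wf_ar_Node by (cases t) fastforce+

lemma wf_graft: "wf s \<Longrightarrow> wf u \<Longrightarrow> wf (graft i s u)"
  and wf_graft_list: "\<forall>t\<in>set ts. wf t \<Longrightarrow> wf u \<Longrightarrow> \<forall>t\<in>set (graft_list i ts u). wf t"
  by (induction i s u and i ts u rule: graft_graft_list.induct) auto

lemma gen_wf: "wf (gen w one b)"
  by (simp add: gen_def)

lemma ar_gen: "ar (gen w one b) = Suc (w b)"
  using w0 by (auto simp: gen_def sum_list_replicate)

lemma T_iff: "x \<in> T n \<longleftrightarrow> finite (supp x) \<and> (\<forall>t\<in>supp x. wf t \<and> ar t = n)"
  by (simp add: Tcomp_def)

lemma T_delta: "wf t \<Longrightarrow> delta t \<in> T (ar t)"
  by (simp add: T_iff)

lemma T_zero: "(\<lambda>_. 0) \<in> T n"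
  by (simp add: T_iff)

lemma T_lext: "finite (supp x) \<Longrightarrow> (\<And>a. a \<in> supp x \<Longrightarrow> F a \<in> T n) \<Longrightarrow> lext F x \<in> T n"
  using supp_lext[of F x] by (auto simp: T_iff intro!: fin_lext)

lemma T_add: "x \<in> T n \<Longrightarrow> y \<in> T n \<Longrightarrow> (\<lambda>t. x t + y t) \<in> T n"
  using supp_add[of x y] by (auto simp: T_iff)

lemma T_diff: "x \<in> T n \<Longrightarrow> y \<in> T n \<Longrightarrow> (\<lambda>t. x t - y t) \<in> T n"
  using supp_diff[of x y] by (auto simp: T_iff)

lemma T_smult: "x \<in> T n \<Longrightarrow> (\<lambda>t. c * x t) \<in> T n"
  using supp_smult[of c x] by (auto simp: T_iff)

lemma T_lcomp: "x \<in> T n \<Longrightarrow> y \<in> T m \<Longrightarrow> i < n \<Longrightarrow> lcomp i x y \<in> T (n + m - 1)"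
  unfolding lcomp_lext
proof (rule T_lext)
  assume x: "x \<in> T n" and y: "y \<in> T m" and i: "i < n"
  then show "finite (supp x)" by (simp add: T_iff)
  fix s assume s: "s \<in> supp x"
  show "lext (\<lambda>u. delta (graft i s u)) y \<in> T (n + m - 1)"
  proof (rule T_lext)
    show "finite (supp y)" using y by (simp add: T_iff)
    fix u assume u: "u \<in> supp y"
    have "wf s" "ar s = n" "wf u" "ar u = m" using s u x y by (auto simp: T_iff)
    moreover have "ar (graft i s u) = n + m - 1" using ar_graft[of i s u] i \<open>ar s = n\<close> \<open>ar u = m\<close> by simp
    ultimately show "delta (graft i s u) \<in> T (n + m - 1)"
      using T_delta[of "graft i s u"] wf_graft by metis
  qed
qed

abbreviation I :: "(nat \<Rightarrow> ('b tree \<Rightarrow> 'k) \<Rightarrow> bool) \<Rightarrow> nat \<Rightarrow> ('b tree \<Rightarrow> 'k) \<Rightarrow> bool"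
  where "I \<equiv> op_ideal w one"

lemma I_T: "I R n x \<Longrightarrow> x \<in> T n"
proof (induction rule: op_ideal.induct)
  case (left n x y m i) then show ?case using T_lcomp by blast
next
  case (right m x y n i) then show ?case using T_lcomp
    by (metis add.commute)
qed (auto intro: T_zero T_add T_smult)

lemma I_diff: "I R n x \<Longrightarrow> I R n y \<Longrightarrow> I R n (\<lambda>t. x t - y t)"
proof -
  assume "I R n x" "I R n y"
  then have "I R n (\<lambda>t. x t + (\<lambda>t. (-1) * y t) t)"
    by (intro op_ideal.add op_ideal.smult)
  then show ?thesis by simp
qed

lemma I_sum: "finite S \<Longrightarrow> (\<And>a. a \<in> S \<Longrightarrow> I R n (F a)) \<Longrightarrow> I R n (\<lambda>z. \<Sum>a\<in>S. c a * F a z)"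
proof (induction S rule: finite_induct)
  case empty then show ?case by (simp add: op_ideal.zero)
next
  case (insert b S)
  then have "I R n (\<lambda>t. (\<lambda>z. c b * F b z) t + (\<lambda>z. \<Sum>a\<in>S. c a * F a z) t)"
    by (intro op_ideal.add op_ideal.smult) auto
  then show ?case using insert by simp
qed

lemma I_lext: "finite (supp x) \<Longrightarrow> (\<And>a. a \<in> supp x \<Longrightarrow> I R n (F a)) \<Longrightarrow> I R n (lext F x)"
  unfolding lext_def by (rule I_sum)

lemma I_mono: "I R n x \<Longrightarrow> (\<And>n x. R n x \<Longrightarrow> R' n x) \<Longrightarrow> I R' n x"
proof (induction rule: op_ideal.induct)
  case (left n x y m i) then show ?case by (intro op_ideal.left) auto
next
  case (right m x y n i) then show ?case by (intro op_ideal.right) auto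
qed (auto intro: op_ideal.intros)

lemma I_eq: "I R n x \<Longrightarrow> x = y \<Longrightarrow> I R n y" by simp

end

lemma list_all2_ar: "list_all2 (\<lambda>v c. ar v = ar c) vs cs \<Longrightarrow> sum_list (map ar vs) = sum_list (map ar cs)"
  by (induction rule: list_all2_induct) auto

context wga begin

fun red1 :: "'b \<Rightarrow> 'b tree \<Rightarrow> 'b tree list \<Rightarrow> 'b tree \<Rightarrow> 'k" where
  "red1 b Leaf vs = delta (Node b (Leaf # vs))"
| "red1 b (Node c (Leaf # us)) vs = lext (\<lambda>d. delta (Node d (Leaf # us @ vs))) (mult b c)"
| "red1 b (Node c []) vs = (\<lambda>_. 0)"
| "red1 b (Node c (Node e l # us)) vs = (\<lambda>_. 0)"

definition nodeG :: "'b \<Rightarrow> ('b tree \<Rightarrow> 'k) \<Rightarrow> ('b tree list \<Rightarrow> 'k) \<Rightarrow> 'b tree \<Rightarrow> 'k" where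
  "nodeG b X P = lext (\<lambda>s0. lext (\<lambda>vs. red1 b s0 vs) P) X"

fun NF :: "'b tree \<Rightarrow> 'b tree \<Rightarrow> 'k" where
  "NF Leaf = delta Leaf"
| "NF (Node b []) = (\<lambda>_. 0)"
| "NF (Node b (x # cs)) = nodeG b (NF x) (prodv (map NF cs))"

end

lemma list_all2_mono_set: "list_all2 P vs cs \<Longrightarrow> (\<And>v c. c \<in> set cs \<Longrightarrow> P v c \<Longrightarrow> Q v c) \<Longrightarrow> list_all2 Q vs cs"
  by (induction rule: list_all2_induct) auto

lemma list_all2_set1: "list_all2 Q vs cs \<Longrightarrow> v \<in> set vs \<Longrightarrow> \<exists>c\<in>set cs. Q v c"
  by (induction rule: list_all2_induct) auto

context wga begin
lemma fin_red1[simp]: "finite (supp (red1 b s vs))"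
  by (induction b s vs rule: red1.induct) (auto intro!: fin_lext)

lemma fin_NF[simp]: "finite (supp (NF t))"
  by (induction t rule: NF.induct) (auto simp: nodeG_def intro!: fin_lext fin_prodv)

lemma fin_nodeG[simp]: "finite (supp X) \<Longrightarrow> finite (supp P) \<Longrightarrow> finite (supp (nodeG b X P))"
  by (auto simp: nodeG_def intro!: fin_lext)

lemma supp_red1: "t \<in> supp (red1 b s0 vs) \<Longrightarrow>
   (s0 = Leaf \<and> t = Node b (Leaf # vs)) \<or>
   (\<exists>c us d. s0 = Node c (Leaf # us) \<and> d \<in> supp (mult b c) \<and> t = Node d (Leaf # us @ vs))"
proof (induction b s0 vs rule: red1.induct)
  case (2 b c us vs)
  then show ?case using supp_lext[of "\<lambda>d. delta (Node d (Leaf # us @ vs))" "mult b c"] by auto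
qed (auto simp: supp_def delta_def split: if_splits)

lemma supp_nodeG: "t \<in> supp (nodeG b X P) \<Longrightarrow> \<exists>s0\<in>supp X. \<exists>vs\<in>supp P. t \<in> supp (red1 b s0 vs)"
proof -
  assume a: "t \<in> supp (nodeG b X P)"
  have "t \<in> (\<Union>s0\<in>supp X. supp (lext (\<lambda>vs. red1 b s0 vs) P))"
    by (rule subsetD[OF supp_lext]) (use a in \<open>simp add: nodeG_def\<close>)
  then obtain s0 where s0: "s0 \<in> supp X" "t \<in> supp (lext (\<lambda>vs. red1 b s0 vs) P)" by blast
  have "t \<in> (\<Union>vs\<in>supp P. supp (red1 b s0 vs))"
    by (rule subsetD[OF supp_lext]) (rule s0(2))
  then obtain vs where "vs \<in> supp P" "t \<in> supp (red1 b s0 vs)" by blast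
  then show ?thesis using s0(1) by blast
qed

lemma supp_NF_Node: "t \<in> supp (NF (Node b (x # cs))) \<Longrightarrow>
   \<exists>s0 vs. s0 \<in> supp (NF x) \<and> list_all2 (\<lambda>v c. v \<in> supp (NF c)) vs cs \<and>
     ((s0 = Leaf \<and> t = Node b (Leaf # vs)) \<or>
      (\<exists>c us d. s0 = Node c (Leaf # us) \<and> d \<in> supp (mult b c) \<and> t = Node d (Leaf # us @ vs)))"
proof -
  assume "t \<in> supp (NF (Node b (x # cs)))"
  then have "t \<in> supp (nodeG b (NF x) (prodv (map NF cs)))" by simp
  from supp_nodeG[OF this] obtain s0 vs where "s0 \<in> supp (NF x)" "vs \<in> supp (prodv (map NF cs))" "t \<in> supp (red1 b s0 vs)"
    by blast
  note h = this
  have "list_all2 (\<lambda>v c. v \<in> supp (NF c)) vs cs"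
    using supp_prodv[OF h(2)] unfolding list_all2_map2 .
  then show ?thesis using supp_red1[OF h(3)] h(1) by blast
qed

lemma ll_NF: "s \<in> supp (NF t) \<Longrightarrow> left_leaf s"
proof (induction t arbitrary: s rule: NF.induct)
  case 1 then show ?case by simp
next
  case (2 b) then show ?case by simp
next
  case (3 b x cs)
  from supp_NF_Node[OF "3.prems"] obtain s0 vs where
    h: "s0 \<in> supp (NF x)" "list_all2 (\<lambda>v c. v \<in> supp (NF c)) vs cs"
     "(s0 = Leaf \<and> s = Node b (Leaf # vs)) \<or>
      (\<exists>c us d. s0 = Node c (Leaf # us) \<and> d \<in> supp (mult b c) \<and> s = Node d (Leaf # us @ vs))"
    by blast
  have "list_all2 (\<lambda>v c. left_leaf v) vs cs"
    using h(2) "3.IH"(2) by (rule list_all2_mono_set)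
  then have "\<forall>v\<in>set vs. left_leaf v" by (auto dest: list_all2_set1)
  moreover have "left_leaf s0" using "3.IH"(1) h(1) by blast
  ultimately show ?case using h(3) by auto
qed

lemma NF_ll: "left_leaf t \<Longrightarrow> NF t = delta t"
proof (induction t rule: NF.induct)
  case (3 b x cs)
  then have "x = Leaf" "map NF cs = map delta cs" by auto
  then have "NF (Node b (x # cs)) = nodeG b (delta Leaf) (delta cs)"
    by (simp only: NF.simps prodv_delta)
  then show ?case using \<open>x = Leaf\<close> by (simp add: nodeG_def)
qed auto

lemma wf_NF: "wf t \<Longrightarrow> s \<in> supp (NF t) \<Longrightarrow> wf s \<and> ar s = ar t"
proof (induction t arbitrary: s rule: NF.induct)
  case 1 then show ?case by simp
next
  case (2 b) then show ?case by simp
next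
  case (3 b x cs)
  from supp_NF_Node[OF "3.prems"(2)] obtain s0 vs where
    h: "s0 \<in> supp (NF x)" "list_all2 (\<lambda>v c. v \<in> supp (NF c)) vs cs"
     "(s0 = Leaf \<and> s = Node b (Leaf # vs)) \<or>
      (\<exists>c us d. s0 = Node c (Leaf # us) \<and> d \<in> supp (mult b c) \<and> s = Node d (Leaf # us @ vs))"
    by blast
  have wfb: "b \<noteq> one" "length cs = w b" "wf x" "\<forall>c\<in>set cs. wf c" using "3.prems"(1) by auto
  have l2: "list_all2 (\<lambda>v c. wf v \<and> ar v = ar c) vs cs"
    using h(2) by (rule list_all2_mono_set) (use "3.IH"(2) wfb(4) in blast)
  then have sv: "sum_list (map ar vs) = sum_list (map ar cs)"
    by (intro list_all2_ar) (auto elim: list_all2_mono)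
  have lv: "length vs = length cs" "\<forall>v\<in>set vs. wf v" using l2
    by (auto simp: list_all2_lengthD dest: list_all2_set1)
  have s0: "wf s0" "ar s0 = ar x" using "3.IH"(1)[OF wfb(3) h(1)] by auto
  show ?case
  proof (cases "s0 = Leaf")
    case True
    then have e: "s = Node b (Leaf # vs)" using h(3) by auto
    have ax: "ar x = 1" using s0(2) True by simp
    have "wf s" unfolding e using wfb(1,2) lv by simp
    moreover have "ar s = ar (Node b (x # cs))" unfolding e using ax sv by simp
    ultimately show ?thesis by blast
  next
    case False
    then obtain c us d where e: "s0 = Node c (Leaf # us)" "d \<in> supp (mult b c)" "s = Node d (Leaf # us @ vs)"
      using h(3) by blast
    have wd: "w d = w b + w c" using mult_w[OF e(2)] .
    have d1: "d \<noteq> one" using mult_supp_not_one[OF wfb(1) e(2)] .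
    have us: "length us = w c" "ar s0 = 1 + sum_list (map ar us)" "\<forall>u\<in>set us. wf u"
      using s0(1) e(1) by auto
    have "wf s" unfolding e(3) using wd d1 us(1,3) lv wfb(2) by auto
    moreover have "ar s = ar (Node b (x # cs))" unfolding e(3) using us(2) s0(2) sv by simp
    ultimately show ?thesis by blast
  qed
qed

end

lemma lext_delta_inj:
  assumes "inj f" and fY: "finite (supp Y)"
  shows "lext (\<lambda>a. delta (f a)) Y (f a0) = (Y a0 :: 'k::field)"
proof -
  have "lext (\<lambda>a. delta (f a)) Y (f a0) = (\<Sum>a\<in>supp Y. if a0 = a then Y a else 0)"
    unfolding lext_apply by (rule sum.cong) (auto simp: delta_def inj_eq[OF assms(1)])
  also have "\<dots> = Y a0"
  proof (cases "a0 \<in> supp Y")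
    case True then show ?thesis using sum.delta'[OF fY, of a0 Y] by simp
  next
    case False then show ?thesis by (auto simp: supp_def intro!: sum.neutral)
  qed
  finally show ?thesis .
qed

lemma lext_delta_notin:
  "z \<notin> range f \<Longrightarrow> lext (\<lambda>a. delta (f a)) Y z = (0 :: 'k::field)"
  unfolding lext_apply by (rule sum.neutral) (auto simp: delta_def)

lemma prodv_Cons_lext:
  assumes fX: "finite (supp X)" and fP: "finite (supp (prodv Xs))"
  shows "prodv (X # Xs) = lext (\<lambda>a. lext (\<lambda>as. delta (a # as)) (prodv Xs)) (X :: 'a \<Rightarrow> 'k::field)"
proof (rule ext)
  fix l
  show "prodv (X # Xs) l = lext (\<lambda>a. lext (\<lambda>as. delta (a # as)) (prodv Xs)) X l"
  proof (cases l)
    case Nil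
    then show ?thesis
      by (simp add: lext_apply delta_def)
  next
    case (Cons a0 as0)
    have "lext (\<lambda>a. lext (\<lambda>as. delta (a # as)) (prodv Xs)) X l
        = (\<Sum>a\<in>supp X. if a0 = a then X a * prodv Xs as0 else 0)"
    proof (unfold lext_apply[of _ X], rule sum.cong[OF refl])
      fix a
      show "X a * lext (\<lambda>as. delta (a # as)) (prodv Xs) l = (if a0 = a then X a * prodv Xs as0 else 0)"
      proof (cases "a = a0")
        case True
        then show ?thesis using lext_delta_inj[of "\<lambda>as. a # as" "prodv Xs" as0] Cons fP
          by (simp add: inj_def)
      next
        case False
        then show ?thesis using lext_delta_notin[of l "\<lambda>as. a # as" "prodv Xs"] Cons by auto
      qed
    qed
    also have "\<dots> = X a0 * prodv Xs as0"
    proof (cases "a0 \<in> supp X")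
      case True then show ?thesis using sum.delta'[OF fX, of a0 "\<lambda>a. X a * prodv Xs as0"] by simp
    next
      case False then show ?thesis by (auto simp: supp_def intro!: sum.neutral)
    qed
    finally show ?thesis using Cons by simp
  qed
qed

lemma prodv_Nil_delta: "prodv [] = delta []"
  by (simp add: prodv.simps(1) delta_def fun_eq_iff)

lemma prodv_app:
  assumes "\<And>X. X \<in> set A \<Longrightarrow> finite (supp X)" "\<And>X. X \<in> set B \<Longrightarrow> finite (supp X)"
  shows "prodv (A @ B) = lext (\<lambda>vs. lext (\<lambda>ws. delta (vs @ ws)) (prodv B)) (prodv A :: 'a list \<Rightarrow> 'k::field)"
  using assms(1)
proof (induction A)
  case Nil
  then show ?case using assms(2) by (simp add: prodv_Nil_delta lext_delta_id fin_prodv)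
next
  case (Cons X A)
  have fA: "finite (supp (prodv A))" using Cons.prems by (intro fin_prodv) auto
  have fB: "finite (supp (prodv B))" using assms(2) by (intro fin_prodv) auto
  have fX: "finite (supp X)" using Cons.prems by auto
  have fAB: "finite (supp (prodv (A @ B)))" using Cons.prems assms(2) by (intro fin_prodv) auto
  have "prodv ((X # A) @ B) = lext (\<lambda>a. lext (\<lambda>as. delta (a # as)) (prodv (A @ B))) X"
    using prodv_Cons_lext[OF fX fAB] by simp
  also have "\<dots> = lext (\<lambda>a. lext (\<lambda>vs. lext (\<lambda>ws. delta (a # vs @ ws)) (prodv B)) (prodv A)) X"
    using Cons by (simp add: lext_assoc fA fB fin_lext)
  also have "\<dots> = lext (\<lambda>vs. lext (\<lambda>ws. delta (vs @ ws)) (prodv B)) (prodv (X # A))"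
    by (simp only: prodv_Cons_lext[OF fX fA]) (simp add: lext_assoc fX fA fin_lext)
  finally show ?case .
qed

context wga begin

lemma fin_NF_set: "X \<in> set (map NF cs) \<Longrightarrow> finite (supp X)" by auto

lemma nodeG_linX: "finite (supp V) \<Longrightarrow> (\<And>d. finite (supp (F d))) \<Longrightarrow>
   nodeG b (lext F V) P = lext (\<lambda>d. nodeG b (F d) P) V"
  unfolding nodeG_def by (simp add: lext_assoc)

lemma nodeG_linP: "finite (supp X) \<Longrightarrow> finite (supp V) \<Longrightarrow> (\<And>d. finite (supp (F d))) \<Longrightarrow>
   nodeG b X (lext F V) = lext (\<lambda>d. nodeG b X (F d)) V"
proof -
  assume fX: "finite (supp X)" and fV: "finite (supp V)" and fF: "\<And>d. finite (supp (F d))"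
  have "nodeG b X (lext F V) = lext (\<lambda>s0. lext (\<lambda>d. lext (red1 b s0) (F d)) V) X"
    unfolding nodeG_def by (simp add: lext_assoc fV fF)
  also have "\<dots> = lext (\<lambda>d. lext (\<lambda>s0. lext (red1 b s0) (F d)) X) V"
    by (rule lext_swap[OF fX fV])
  finally show ?thesis by (simp add: nodeG_def)
qed

end

context wga begin

lemma root_basis:
  assumes ll: "left_leaf x0" and fP: "finite (supp P)"
  shows "nodeG b (red1 c x0 us') P = lext (\<lambda>d. lext (\<lambda>vs. red1 d x0 (us' @ vs)) P) (mult b c)"
proof (cases x0)
  case Leaf
  have "nodeG b (red1 c x0 us') P = lext (\<lambda>vs. lext (\<lambda>d. delta (Node d (Leaf # us' @ vs))) (mult b c)) P"
    using Leaf by (simp add: nodeG_def) (rule lext_cong, simp)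
  also have "\<dots> = lext (\<lambda>d. lext (\<lambda>vs. delta (Node d (Leaf # us' @ vs))) P) (mult b c)"
    by (rule lext_swap[OF fP fin_mult])
  finally show ?thesis using Leaf by simp
next
  case (Node e ts)
  with ll obtain ps where e: "x0 = Node e (Leaf # ps)" by (cases ts) auto
  define D where "D = (\<lambda>vs g. delta (Node g (Leaf # ps @ us' @ vs)) :: 'b tree \<Rightarrow> 'k)"
  have "nodeG b (red1 c x0 us') P = lext (\<lambda>f. nodeG b (delta (Node f (Leaf # ps @ us'))) P) (mult c e)"
    unfolding e red1.simps by (rule nodeG_linX) auto
  also have "\<dots> = lext (\<lambda>f. lext (\<lambda>vs. lext (D vs) (mult b f)) P) (mult c e)"
    by (simp add: nodeG_def D_def) (rule lext_cong, rule lext_cong, simp)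
  also have "\<dots> = lext (\<lambda>vs. lext (\<lambda>f. lext (D vs) (mult b f)) (mult c e)) P"
    by (rule lext_swap[OF fin_mult fP])
  also have "\<dots> = lext (\<lambda>vs. lext (D vs) (lext (mult b) (mult c e))) P"
    by (simp add: lext_assoc)
  also have "\<dots> = lext (\<lambda>vs. lext (D vs) (lext (\<lambda>d. mult d e) (mult b c))) P"
    by (simp add: massoc)
  also have "\<dots> = lext (\<lambda>vs. lext (\<lambda>d. lext (D vs) (mult d e)) (mult b c)) P"
    by (simp add: lext_assoc)
  also have "\<dots> = lext (\<lambda>d. lext (\<lambda>vs. lext (D vs) (mult d e)) P) (mult b c)"
    by (rule lext_swap[OF fP fin_mult])
  finally show ?thesis by (simp add: e D_def)
qed

lemma NF_root: "NF (Node b (Node c (x # us) # cs)) = lext (\<lambda>d. NF (Node d (x # us @ cs))) (mult b c)"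
proof -
  define X where "X = NF x"
  define PU where "PU = prodv (map NF us)"
  define PC where "PC = prodv (map NF cs)"
  have fX: "finite (supp X)" and fU: "finite (supp PU)" and fC: "finite (supp PC)"
    by (auto simp: X_def PU_def PC_def intro!: fin_prodv)
  have "NF (Node b (Node c (x # us) # cs)) = nodeG b (lext (\<lambda>x0. lext (red1 c x0) PU) X) PC"
    by (simp add: X_def PU_def PC_def nodeG_def)
  also have "\<dots> = lext (\<lambda>x0. nodeG b (lext (red1 c x0) PU) PC) X"
    by (rule nodeG_linX[OF fX]) (simp add: fU fin_lext)
  also have "\<dots> = lext (\<lambda>x0. lext (\<lambda>us'. nodeG b (red1 c x0 us') PC) PU) X"
    by (simp add: nodeG_linX[OF fU])
  also have "\<dots> = lext (\<lambda>x0. lext (\<lambda>us'. lext (\<lambda>d. lext (\<lambda>vs. red1 d x0 (us' @ vs)) PC) (mult b c)) PU) X"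
    by (rule lext_cong, rule lext_cong, rule root_basis[OF _ fC]) (simp add: X_def ll_NF)
  also have "\<dots> = lext (\<lambda>x0. lext (\<lambda>d. lext (\<lambda>us'. lext (\<lambda>vs. red1 d x0 (us' @ vs)) PC) PU) (mult b c)) X"
    by (rule lext_cong, rule lext_swap[OF fU fin_mult])
  also have "\<dots> = lext (\<lambda>d. lext (\<lambda>x0. lext (\<lambda>us'. lext (\<lambda>vs. red1 d x0 (us' @ vs)) PC) PU) X) (mult b c)"
    by (rule lext_swap[OF fX fin_mult])
  also have "\<dots> = lext (\<lambda>d. NF (Node d (x # us @ cs))) (mult b c)"
  proof (rule lext_cong)
    fix d
    have PUC: "prodv (map NF (us @ cs)) = lext (\<lambda>vs. lext (\<lambda>ws. delta (vs @ ws)) PC) PU"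
      unfolding PU_def PC_def map_append by (rule prodv_app) auto
    have "NF (Node d (x # us @ cs)) = lext (\<lambda>x0. lext (red1 d x0) (lext (\<lambda>vs. lext (\<lambda>ws. delta (vs @ ws)) PC) PU)) X"
      by (simp only: NF.simps nodeG_def PUC X_def)
    also have "\<dots> = lext (\<lambda>x0. lext (\<lambda>us'. lext (\<lambda>vs. red1 d x0 (us' @ vs)) PC) PU) X"
      by (simp add: lext_assoc fU fC fin_lext)
    finally show "lext (\<lambda>x0. lext (\<lambda>us'. lext (\<lambda>vs. red1 d x0 (us' @ vs)) PC) PU) X = NF (Node d (x # us @ cs))"
      by simp
  qed
  finally show ?thesis .
qed

end

inductive step :: "'b tree \<Rightarrow> 'b \<Rightarrow> 'b \<Rightarrow> ('b \<Rightarrow> 'b tree) \<Rightarrow> bool" where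
  root: "step (Node b (Node c (x # us) # cs)) b c (\<lambda>d. Node d (x # us @ cs))"
| child: "step t b c g \<Longrightarrow> step (Node a (pre @ t # post)) b c (\<lambda>d. Node a (pre @ g d # post))"

lemma step_eq: "step s b c f \<Longrightarrow> s = s' \<Longrightarrow> f = f' \<Longrightarrow> step s' b c f'" by simp

lemma ar_step: "step s b c f \<Longrightarrow> ar (f d) = ar s"
  by (induction rule: step.induct) auto

lemma nv_step: "step s b c f \<Longrightarrow> nv (f d) < nv s"
  by (induction rule: step.induct) auto

lemma step_Node: "step s b c f \<Longrightarrow> \<exists>a ts. s = Node a ts"
  by (induction rule: step.induct) auto

lemma step_f_Node: "step s b c f \<Longrightarrow> \<exists>a ts. f d = Node a ts"
  by (induction rule: step.induct) auto

lemma graftL_step: "step s b c f \<Longrightarrow> i < ar s \<Longrightarrow> step (graft i s u) b c (\<lambda>d. graft i (f d) u)"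
proof (induction arbitrary: i rule: step.induct)
  case (root b c x us cs)
  show ?case
  proof (cases "i < ar x")
    case True
    show ?thesis
      by (rule step_eq[OF step.root[of b c "graft i x u" us cs]]) (use True in auto)
  next
    case F1: False
    show ?thesis
    proof (cases "i < ar x + sum_list (map ar us)")
      case True
      have "i - ar x < sum_list (map ar us)" using True F1 by simp
      then show ?thesis using F1 True
        by (intro step_eq[OF step.root[of b c x "graft_list (i - ar x) us u" cs]]) (auto simp: G_app1)
    next
      case False
      have "sum_list (map ar us) \<le> i - ar x" using False F1 by simp
      then show ?thesis using F1 False
        by (intro step_eq[OF step.root[of b c x us "graft_list (i - (ar x + sum_list (map ar us))) cs u"]])
          (auto simp: G_app2 diff_diff_add)
    qed
  qed
next
  case (child t b c g a pre post)
  have arg: "\<And>d. ar (g d) = ar t" using child.hyps by (rule ar_step)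
  let ?P = "sum_list (map ar pre)"
  show ?case
  proof (cases "i < ?P")
    case True
    then show ?thesis
      by (intro step_eq[OF step.child[OF child.hyps, of a "graft_list i pre u" post]]) (auto simp: G_app1)
  next
    case F1: False
    show ?thesis
    proof (cases "i - ?P < ar t")
      case True
      then show ?thesis using F1 child.IH[OF True] arg
        by (intro step_eq[OF step.child[OF child.IH[OF True], of a pre post]]) (auto simp: G_app2)
    next
      case False
      then show ?thesis using F1 arg
        by (intro step_eq[OF step.child[OF child.hyps, of a pre "graft_list (i - ?P - ar t) post u"]])
          (auto simp: G_app2)
    qed
  qed
qed

lemma graftR_step: "step u b c g \<Longrightarrow> i < ar s \<Longrightarrow> step (graft i s u) b c (\<lambda>d. graft i s (g d))"
proof (induction s arbitrary: i)
  case Leaf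
  then show ?case by simp
next
  case (Node a ts)
  then have "i < sum_list (map ar ts)" by simp
  from graft_split[OF this] obtain pre t post j where
    h: "ts = pre @ t # post" "j < ar t" "i = sum_list (map ar pre) + j" by blast
  have "t \<in> set ts" using h by simp
  from Node.IH[OF this Node.prems(1) h(2)] have "step (graft j t u) b c (\<lambda>d. graft j t (g d))" .
  from step.child[OF this, of a pre post] show ?case
    by (rule step_eq) (use h in \<open>auto simp: G_at\<close>)
qed

context wga begin

lemma Inv: "step s b c f \<Longrightarrow> NF s = lext (\<lambda>d. NF (f d)) (mult b c)"
proof (induction rule: step.induct)
  case (root b c x us cs)
  then show ?case by (rule NF_root)
next
  case (child t b c g a pre post)
  show ?case
  proof (cases pre)
    case Nil
    then show ?thesis using child.IH by (simp add: nodeG_linX)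
  next
    case (Cons x pre')
    have "NF (Node a (pre @ t # post)) = nodeG a (NF x) (prodv (map NF pre' @ lext (\<lambda>d. NF (g d)) (mult b c) # map NF post))"
      using Cons child.IH by simp
    also have "\<dots> = nodeG a (NF x) (lext (\<lambda>d. prodv (map NF pre' @ NF (g d) # map NF post)) (mult b c))"
      by (simp only: prodv_lin)
    also have "\<dots> = lext (\<lambda>d. nodeG a (NF x) (prodv (map NF pre' @ NF (g d) # map NF post))) (mult b c)"
      by (rule nodeG_linP) (auto intro!: fin_prodv)
    also have "\<dots> = lext (\<lambda>d. NF (Node a (pre @ g d # post))) (mult b c)"
      using Cons by simp
    finally show ?thesis .
  qed
qed

lemma wf_step: "step s b c f \<Longrightarrow> wf s \<Longrightarrow> b \<noteq> one \<and> c \<noteq> one \<and> (\<forall>d\<in>supp (mult b c). wf (f d))"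
proof (induction rule: step.induct)
  case (root b c x us cs)
  have h: "b \<noteq> one" "c \<noteq> one" "length cs = w b" "length us = w c" "wf x" "\<forall>t\<in>set us. wf t" "\<forall>t\<in>set cs. wf t"
    using root by auto
  have "\<forall>d\<in>supp (mult b c). wf (Node d (x # us @ cs))"
  proof
    fix d assume d: "d \<in> supp (mult b c)"
    have "d \<noteq> one" using mult_supp_not_one[OF h(1) d] .
    moreover have "w d = w b + w c" using mult_w[OF d] .
    ultimately show "wf (Node d (x # us @ cs))" using h by auto
  qed
  then show ?case using h by blast
next
  case (child t b c g a pre post)
  then show ?case by auto
qed

lemma exists_step: "wf s \<Longrightarrow> \<not> left_leaf s \<Longrightarrow> \<exists>b c f. step s b c f"
proof (induction s)
  case Leaf then show ?case by simp
next
  case (Node a ts)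
  have wfs: "a \<noteq> one" "length ts = Suc (w a)" "\<forall>t\<in>set ts. wf t" using Node.prems by auto
  then obtain t0 ts' where ts: "ts = t0 # ts'" by (cases ts) auto
  show ?case
  proof (cases t0)
    case (Node c cs)
    with wfs ts have "cs \<noteq> []" by auto
    then obtain x us where "cs = x # us" by (cases cs) auto
    then show ?thesis using ts Node step.root[of a c x us ts'] by auto
  next
    case Leaf
    then have "\<exists>t\<in>set ts. \<not> left_leaf t" using Node.prems ts by auto
    then obtain pre t post where sp: "ts = pre @ t # post" "\<not> left_leaf t"
      by (metis split_list)
    then have "t \<in> set ts" by simp
    from Node.IH[OF this] wfs sp obtain b c g where "step t b c g" by auto
    then show ?thesis using sp step.child[of t b c g a pre post] by auto
  qed
qed

end

lemma lext_lcomp: "lext F (lcomp i x y) = lext (\<lambda>s. lext (\<lambda>u. F (graft i s u)) y) x"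
  if "finite (supp x)" "finite (supp y)"
  using that by (simp add: lcomp_lext lext_assoc fin_lext)

lemma genv_lext: "genv w one f = lext (\<lambda>b. delta (gen w one b)) f"
  by (rule ext) (simp add: genv_def lext_def)

context wga begin

lemma L2: "wf s \<Longrightarrow> i < ar s \<Longrightarrow> NF (graft i s u) = lext (\<lambda>s'. NF (graft i s' u)) (NF s)"
proof (induction "nv s" arbitrary: s rule: less_induct)
  case less
  show ?case
  proof (cases "left_leaf s")
    case True
    then show ?thesis by (simp add: NF_ll)
  next
    case False
    then obtain b c f where st: "step s b c f" using exists_step less.prems by blast
    have wff: "\<And>d. d \<in> supp (mult b c) \<Longrightarrow> wf (f d)" using wf_step[OF st less.prems(1)] by blast
    have "NF (graft i s u) = lext (\<lambda>d. NF (graft i (f d) u)) (mult b c)"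
      using Inv[OF graftL_step[OF st less.prems(2)]] .
    also have "\<dots> = lext (\<lambda>d. lext (\<lambda>s'. NF (graft i s' u)) (NF (f d))) (mult b c)"
    proof (rule lext_cong)
      fix d assume "d \<in> supp (mult b c)"
      show "NF (graft i (f d) u) = lext (\<lambda>s'. NF (graft i s' u)) (NF (f d))"
        using less.hyps[OF nv_step[OF st]] wff[OF \<open>d \<in> _\<close>] less.prems(2) ar_step[OF st] by metis
    qed
    also have "\<dots> = lext (\<lambda>s'. NF (graft i s' u)) (lext (\<lambda>d. NF (f d)) (mult b c))"
      by (simp add: lext_assoc)
    also have "\<dots> = lext (\<lambda>s'. NF (graft i s' u)) (NF s)"
      using Inv[OF st] by simp
    finally show ?thesis .
  qed
qed

lemma L1: "wf u \<Longrightarrow> i < ar s \<Longrightarrow> NF (graft i s u) = lext (\<lambda>u'. NF (graft i s u')) (NF u)"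
proof (induction "nv u" arbitrary: u rule: less_induct)
  case less
  show ?case
  proof (cases "left_leaf u")
    case True
    then show ?thesis by (simp add: NF_ll)
  next
    case False
    then obtain b c g where st: "step u b c g" using exists_step less.prems by blast
    have wfg: "\<And>d. d \<in> supp (mult b c) \<Longrightarrow> wf (g d)" using wf_step[OF st less.prems(1)] by blast
    have "NF (graft i s u) = lext (\<lambda>d. NF (graft i s (g d))) (mult b c)"
      using Inv[OF graftR_step[OF st less.prems(2)]] .
    also have "\<dots> = lext (\<lambda>d. lext (\<lambda>u'. NF (graft i s u')) (NF (g d))) (mult b c)"
    proof (rule lext_cong)
      fix d assume "d \<in> supp (mult b c)"
      show "NF (graft i s (g d)) = lext (\<lambda>u'. NF (graft i s u')) (NF (g d))"
        using less.hyps[OF nv_step[OF st]] wfg[OF \<open>d \<in> _\<close>] less.prems(2) by metis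
    qed
    also have "\<dots> = lext (\<lambda>u'. NF (graft i s u')) (lext (\<lambda>d. NF (g d)) (mult b c))"
      by (simp add: lext_assoc)
    also have "\<dots> = lext (\<lambda>u'. NF (graft i s u')) (NF u)"
      using Inv[OF st] by simp
    finally show ?thesis .
  qed
qed

lemma NF_gen: "NF (gen w one b) = delta (gen w one b)"
  by (rule NF_ll) (simp add: gen_def)

lemma gen_prod: "NF (graft 0 (gen w one b) (gen w one c)) = lext (\<lambda>d. delta (gen w one d)) (mult b c)"
proof (cases "b = one")
  case True
  then show ?thesis by (simp add: gen_def NF_ll)
next
  case b: False
  show ?thesis
  proof (cases "c = one")
    case True
    then have "gen w one c = Leaf" by (simp add: gen_def)
    then show ?thesis using True by (simp add: NF_gen)
  next
    case c: False
    have "graft 0 (gen w one b) (gen w one c) = Node b (Node c (Leaf # replicate (w c) Leaf) # replicate (w b) Leaf)"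
      using b c by (simp add: gen_def)
    then have "NF (graft 0 (gen w one b) (gen w one c)) = lext (\<lambda>d. NF (Node d (Leaf # replicate (w c) Leaf @ replicate (w b) Leaf))) (mult b c)"
      by (simp only: NF_root)
    also have "\<dots> = lext (\<lambda>d. delta (gen w one d)) (mult b c)"
    proof (rule lext_cong)
      fix d assume d: "d \<in> supp (mult b c)"
      have "d \<noteq> one" using mult_supp_not_one[OF b d] .
      moreover have "w d = w b + w c" using mult_w[OF d] .
      ultimately have "gen w one d = Node d (Leaf # replicate (w c) Leaf @ replicate (w b) Leaf)"
        by (simp add: gen_def replicate_add[symmetric] add.commute)
      then show "NF (Node d (Leaf # replicate (w c) Leaf @ replicate (w b) Leaf)) = delta (gen w one d)"
        by (metis NF_gen)
    qed
    finally show ?thesis .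
  qed
qed

lemma T_fin: "x \<in> T n \<Longrightarrow> finite (supp x)" by (simp add: T_iff)

lemma Acomp_fin: "a \<in> Acomp w p \<Longrightarrow> finite (supp a)" by (simp add: Acomp_def)

lemma fin_genv: "finite (supp a) \<Longrightarrow> finite (supp (genv w one a :: 'b tree \<Rightarrow> 'k))"
  by (simp add: genv_lext fin_lext)

lemma fin_mulv: "finite (supp a1) \<Longrightarrow> finite (supp a2) \<Longrightarrow> finite (supp (mulv mult a1 a2))"
  by (simp add: mulv_lext fin_lext)

lemma fin_lcomp: "finite (supp x) \<Longrightarrow> finite (supp y) \<Longrightarrow> finite (supp (lcomp i x (y :: _ \<Rightarrow> 'k)))"
  by (simp add: lcomp_lext fin_lext)

lemma Phi_kills: "I (R_max w one mult) n x \<Longrightarrow> lext NF x = (\<lambda>_. 0)"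
proof (induction rule: op_ideal.induct)
  case (gen n x)
  then obtain p q a1 a2 where h: "a1 \<in> Acomp w p" "a2 \<in> Acomp w q"
     "x = (\<lambda>t. lcomp 0 (genv w one a1) (genv w one a2) t - genv w one (mulv mult a1 a2) t)"
    unfolding R_max_def by blast
  have f1: "finite (supp a1)" and f2: "finite (supp a2)" using h Acomp_fin by auto
  have "lext NF (lcomp 0 (genv w one a1) (genv w one a2))
      = lext (\<lambda>b. lext (\<lambda>c. NF (graft 0 (gen w one b) (gen w one c))) a2) a1"
    by (simp add: lext_lcomp fin_genv f1 f2) (simp add: genv_lext lext_assoc f1 f2)
  also have "\<dots> = lext (\<lambda>b. lext (\<lambda>c. lext (\<lambda>d. delta (gen w one d)) (mult b c)) a2) a1"
    by (simp add: gen_prod)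
  also have "\<dots> = lext NF (genv w one (mulv mult a1 a2))"
    by (simp add: genv_lext mulv_lext lext_assoc f1 f2 fin_lext NF_gen)
  finally show ?case
    using h(3) by (simp add: lext_diff fin_lcomp fin_genv fin_mulv f1 f2)
next
  case (zero n) then show ?case by simp
next
  case (add n x y)
  then show ?case using I_T[OF add.hyps(1)] I_T[OF add.hyps(2)] by (simp add: lext_add T_fin)
next
  case (smult n x c)
  then show ?case by (simp add: lext_smult)
next
  case (left n x y m i)
  have fx: "finite (supp x)" using I_T[OF left.hyps(1)] T_fin by blast
  have fy: "finite (supp y)" using left.hyps(2) T_fin by blast
  have "lext NF (lcomp i x y) = lext (\<lambda>s. lext (\<lambda>u. NF (graft i s u)) y) x"
    by (rule lext_lcomp[OF fx fy])
  also have "\<dots> = lext (\<lambda>s. lext (\<lambda>u. lext (\<lambda>s'. NF (graft i s' u)) (NF s)) y) x"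
  proof (rule lext_cong, rule lext_cong)
    fix s u assume s: "s \<in> supp x"
    then have "wf s" "ar s = n" using I_T[OF left.hyps(1)] by (auto simp: T_iff)
    then show "NF (graft i s u) = lext (\<lambda>s'. NF (graft i s' u)) (NF s)"
      using L2 left.hyps(3) by simp
  qed
  also have "\<dots> = lext (\<lambda>s. lext (\<lambda>s'. lext (\<lambda>u. NF (graft i s' u)) y) (NF s)) x"
    by (rule lext_cong, rule lext_swap[OF fy]) simp
  also have "\<dots> = lext (\<lambda>s'. lext (\<lambda>u. NF (graft i s' u)) y) (lext NF x)"
    by (simp add: lext_assoc fx)
  finally show ?case using left.IH by simp
next
  case (right m x y n i)
  have fx: "finite (supp x)" using I_T[OF right.hyps(1)] T_fin by blast
  have fy: "finite (supp y)" using right.hyps(2) T_fin by blast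
  have "lext NF (lcomp i y x) = lext (\<lambda>s. lext (\<lambda>u. NF (graft i s u)) x) y"
    by (rule lext_lcomp[OF fy fx])
  also have "\<dots> = lext (\<lambda>s. lext (\<lambda>u. lext (\<lambda>u'. NF (graft i s u')) (NF u)) x) y"
  proof (rule lext_cong, rule lext_cong)
    fix s u assume s: "s \<in> supp y" and u: "u \<in> supp x"
    then have "wf u" "ar s = n" using I_T[OF right.hyps(1)] right.hyps(2) by (auto simp: T_iff)
    then show "NF (graft i s u) = lext (\<lambda>u'. NF (graft i s u')) (NF u)"
      using L1 right.hyps(3) by simp
  qed
  also have "\<dots> = lext (\<lambda>s. lext (\<lambda>u'. NF (graft i s u')) (lext NF x)) y"
    by (simp add: lext_assoc fx)
  finally show ?case using right.IH by simp
qed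

end

context wga begin

abbreviation Imax where "Imax \<equiv> I (R_max w one mult)"

lemma E_graft1:
  "finite (supp m) \<Longrightarrow> lcomp k (\<lambda>t. delta s' t - lext (\<lambda>d. delta (f' d)) m t) (delta z)
     = (\<lambda>t. delta (graft k s' z) t - lext (\<lambda>d. delta (graft k (f' d) z)) (m :: 'b \<Rightarrow> 'k) t)"
  by (simp add: lcomp_lext lext_diff fin_lext lext_assoc)

lemma E_graft2:
  "finite (supp m) \<Longrightarrow> lcomp k (delta s0) (\<lambda>t. delta t' t - lext (\<lambda>d. delta (g d)) m t)
     = (\<lambda>t. delta (graft k s0 t') t - lext (\<lambda>d. delta (graft k s0 (g d))) (m :: 'b \<Rightarrow> 'k) t)"
  by (simp add: lcomp_lext lext_diff fin_lext lext_assoc)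

lemma T_E: "wf s \<Longrightarrow> (\<And>d. d \<in> supp m \<Longrightarrow> wf (f d) \<and> ar (f d) = ar s) \<Longrightarrow> finite (supp m) \<Longrightarrow>
   (\<lambda>t. delta s t - lext (\<lambda>d. delta (f d)) m t) \<in> T (ar s)"
proof -
  assume ws: "wf s" and h: "\<And>d. d \<in> supp m \<Longrightarrow> wf (f d) \<and> ar (f d) = ar s" and fm: "finite (supp m)"
  have "lext (\<lambda>d. delta (f d)) m \<in> T (ar s)"
  proof (rule T_lext[OF fm])
    fix d assume "d \<in> supp m"
    then show "delta (f d) \<in> T (ar s)" using h T_delta by metis
  qed
  then show ?thesis by (intro T_diff T_delta ws)
qed

lemma root_ideal_step:
  assumes IH: "Imax (ar s') (\<lambda>t. delta s' t - lext (\<lambda>d. delta (f' d)) (mult b c) t)"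
    and wz: "wf z" and k: "k < ar s'"
    and e1: "graft k s' z = s" and e2: "\<And>d. graft k (f' d) z = f d"
  shows "Imax (ar s) (\<lambda>t. delta s t - lext (\<lambda>d. delta (f d)) (mult b c) t)"
proof -
  have "Imax (ar s' + ar z - 1) (lcomp k (\<lambda>t. delta s' t - lext (\<lambda>d. delta (f' d)) (mult b c) t) (delta z))"
    by (rule op_ideal.left[OF IH T_delta[OF wz] k])
  moreover have "ar s' + ar z - 1 = ar s" using ar_graft[OF k, of z] e1 by simp
  ultimately show ?thesis by (simp add: E_graft1 e1 e2)
qed

lemma all_leaf_replicate: "\<forall>t\<in>set xs. t = Leaf \<Longrightarrow> xs = replicate (length xs) Leaf"
  by (induction xs) auto

lemma sum_ar_leaves: "\<forall>t\<in>set xs. t = Leaf \<Longrightarrow> sum_list (map ar xs) = length xs"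
  by (induction xs) auto

lemma split_first_nonleaf: "\<not> (\<forall>t\<in>set xs. t = Leaf) \<Longrightarrow>
   \<exists>pre z post. xs = pre @ z # post \<and> (\<forall>t\<in>set pre. t = Leaf) \<and> z \<noteq> Leaf"
proof -
  assume "\<not> (\<forall>t\<in>set xs. t = Leaf)"
  then have "\<exists>t\<in>set xs. t \<noteq> Leaf" by blast
  from split_list_first_prop[OF this] show ?thesis by blast
qed

lemma nv_pos: "z \<noteq> Leaf \<Longrightarrow> 0 < nv z" by (cases z) auto

lemma root_ideal:
  "wf (Node b (Node c (x # us) # cs)) \<Longrightarrow>
   Imax (ar (Node b (Node c (x # us) # cs)))
     (\<lambda>t. delta (Node b (Node c (x # us) # cs)) t - lext (\<lambda>d. delta (Node d (x # us @ cs))) (mult b c) t)"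
proof (induction "nv (Node b (Node c (x # us) # cs))" arbitrary: x us cs rule: less_induct)
  case less
  have wfs: "b \<noteq> one" "c \<noteq> one" "length cs = w b" "length us = w c" "wf x"
     "\<forall>t\<in>set us. wf t" "\<forall>t\<in>set cs. wf t" using less.prems by auto
  show ?case
  proof (cases "x = Leaf")
    case False
    let ?s' = "Node b (Node c (Leaf # us) # cs)"
    have "Imax (ar ?s') (\<lambda>t. delta ?s' t - lext (\<lambda>d. delta (Node d (Leaf # us @ cs))) (mult b c) t)"
      using less.hyps[of Leaf us cs] less.prems nv_pos[OF False] by auto
    then show ?thesis
      by (rule root_ideal_step[OF _ wfs(5)]) auto
  next
    case xL: True
    show ?thesis
    proof (cases "\<forall>t\<in>set us. t = Leaf")
      case False
      then obtain pre z post where sp: "us = pre @ z # post" "\<forall>t\<in>set pre. t = Leaf" "z \<noteq> Leaf"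
        using split_first_nonleaf by blast
      let ?s' = "Node b (Node c (Leaf # pre @ Leaf # post) # cs)"
      have sa: "sum_list (map ar (Leaf # pre)) = 1 + length pre" using sp(2) sum_ar_leaves by simp
      have IH: "Imax (ar ?s') (\<lambda>t. delta ?s' t - lext (\<lambda>d. delta (Node d (Leaf # (pre @ Leaf # post) @ cs))) (mult b c) t)"
        using less.hyps[of Leaf "pre @ Leaf # post" cs] less.prems sp nv_pos[OF sp(3)] by auto
      have wz: "wf z" using wfs(6) sp by auto
      show ?thesis unfolding xL
      proof (rule root_ideal_step[OF IH wz, of "1 + length pre"])
        show "1 + length pre < ar ?s'" using sum_ar_leaves[OF sp(2)] by simp
        have "graft_list (1 + length pre) ((Leaf # pre) @ Leaf # post) z = (Leaf # pre) @ z # post"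
          using G_leaf[of "Leaf # pre" post z] sa by simp
        then show "graft (1 + length pre) ?s' z = Node b (Node c (Leaf # us) # cs)"
          using sp(1) sum_ar_leaves[OF sp(2)] by simp
        fix d
        have "graft_list (1 + length pre) ((Leaf # pre) @ Leaf # post @ cs) z = (Leaf # pre) @ z # post @ cs"
          using G_leaf[of "Leaf # pre" "post @ cs" z] sa by simp
        then show "graft (1 + length pre) (Node d (Leaf # (pre @ Leaf # post) @ cs)) z = Node d (Leaf # us @ cs)"
          using sp(1) by simp
      qed
    next
      case usL: True
      show ?thesis
      proof (cases "\<forall>t\<in>set cs. t = Leaf")
        case False
        then obtain pre z post where sp: "cs = pre @ z # post" "\<forall>t\<in>set pre. t = Leaf" "z \<noteq> Leaf"
          using split_first_nonleaf by blast
        let ?A = "Node c (Leaf # us)"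
        let ?s' = "Node b ((?A # pre) @ Leaf # post)"
        have sa: "sum_list (map ar (?A # pre)) = 1 + length us + length pre"
          using sum_ar_leaves[OF sp(2)] sum_ar_leaves[OF usL] by simp
        have sa2: "sum_list (map ar (Leaf # us @ pre)) = 1 + length us + length pre"
          using sum_ar_leaves[OF sp(2)] sum_ar_leaves[OF usL] by simp
        have IH: "Imax (ar ?s') (\<lambda>t. delta ?s' t - lext (\<lambda>d. delta (Node d (Leaf # us @ pre @ Leaf # post))) (mult b c) t)"
          using less.hyps[of Leaf us "pre @ Leaf # post"] less.prems sp nv_pos[OF sp(3)] by auto
        have wz: "wf z" using wfs(7) sp by auto
        show ?thesis unfolding xL
        proof (rule root_ideal_step[OF IH wz, of "1 + length us + length pre"])
          show "1 + length us + length pre < ar ?s'" using sa by simp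
          show "graft (1 + length us + length pre) ?s' z = Node b (Node c (Leaf # us) # cs)"
            using G_leaf[of "?A # pre" post z] sa sp(1) sum_ar_leaves[OF sp(2)] sum_ar_leaves[OF usL] by simp
          fix d
          show "graft (1 + length us + length pre) (Node d (Leaf # us @ pre @ Leaf # post)) z = Node d (Leaf # us @ cs)"
            using G_leaf[of "Leaf # us @ pre" post z] sa2 sp(1) sum_ar_leaves[OF sp(2)] sum_ar_leaves[OF usL] by simp
        qed
      next
        case csL: True
        have us: "us = replicate (w c) Leaf" using all_leaf_replicate[OF usL] wfs(4) by simp
        have cs: "cs = replicate (w b) Leaf" using all_leaf_replicate[OF csL] wfs(3) by simp
        let ?s = "Node b (Node c (x # us) # cs)"
        have R: "R_max w one mult (ar ?s) (\<lambda>t. lcomp 0 (genv w one (delta b)) (genv w one (delta c)) t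
                  - genv w one (mulv mult (delta b) (delta c)) t)"
          unfolding R_max_def
          by (rule exI[of _ "w b"], rule exI[of _ "w c"], rule exI[of _ "delta b"], rule exI[of _ "delta c"])
             (simp add: Acomp_def us cs xL sum_list_replicate)
        have e1: "lcomp 0 (genv w one (delta b)) (genv w one (delta c)) = delta ?s"
          using wfs(1,2) by (simp add: genv_lext lcomp_delta gen_def xL us cs)
        have e2: "genv w one (mulv mult (delta b) (delta c)) = lext (\<lambda>d. delta (Node d (x # us @ cs))) (mult b c)"
        proof -
          have "mulv mult (delta b) (delta c) = mult b c" by (simp add: mulv_lext)
          moreover have "lext (\<lambda>d. delta (gen w one d)) (mult b c) = lext (\<lambda>d. delta (Node d (x # us @ cs))) (mult b c)"
          proof (rule lext_cong)
            fix d assume d: "d \<in> supp (mult b c)"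
            have "d \<noteq> one" using mult_supp_not_one[OF wfs(1) d] .
            moreover have "w d = w b + w c" using mult_w[OF d] .
            ultimately show "delta (gen w one d) = delta (Node d (x # us @ cs))"
              by (simp add: gen_def xL us cs replicate_add[symmetric] add.commute)
          qed
          ultimately show ?thesis by (simp add: genv_lext)
        qed
        have "(\<lambda>t. delta ?s t - lext (\<lambda>d. delta (Node d (x # us @ cs))) (mult b c) t) \<in> T (ar ?s)"
        proof (rule T_E)
          show "wf ?s" using less.prems .
          fix d assume d: "d \<in> supp (mult b c)"
          have "wf (Node d (x # us @ cs))" using wf_step[OF step.root less.prems] d by blast
          then show "wf (Node d (x # us @ cs)) \<and> ar (Node d (x # us @ cs)) = ar ?s" by simp
        qed simp
        moreover have "(\<lambda>t. lcomp 0 (genv w one (delta b)) (genv w one (delta c)) t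
                  - genv w one (mulv mult (delta b) (delta c)) t) =
            (\<lambda>t. delta ?s t - lext (\<lambda>d. delta (Node d (x # us @ cs))) (mult b c) t)"
          by (simp only: e1 e2)
        ultimately show ?thesis
          using op_ideal.gen[where w=w and one=one and R="R_max w one mult"] R by metis
      qed
    qed
  qed
qed

lemma step_ideal: "step s b c f \<Longrightarrow> wf s \<Longrightarrow> Imax (ar s) (\<lambda>t. delta s t - lext (\<lambda>d. delta (f d)) (mult b c) t)"
proof (induction rule: step.induct)
  case (root b c x us cs)
  then show ?case by (rule root_ideal)
next
  case (child t b c g a pre post)
  let ?s0 = "Node a (pre @ Leaf # post)"
  let ?k = "sum_list (map ar pre)"
  have wt: "wf t" using child.prems by simp
  have ws0: "wf ?s0" using child.prems by auto
  have k: "?k < ar ?s0" by simp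
  have "Imax (ar ?s0 + ar t - 1) (lcomp ?k (delta ?s0) (\<lambda>tt. delta t tt - lext (\<lambda>d. delta (g d)) (mult b c) tt))"
    by (rule op_ideal.right[OF child.IH[OF wt] T_delta[OF ws0] k])
  moreover have "ar ?s0 + ar t - 1 = ar (Node a (pre @ t # post))" by simp
  ultimately show ?case by (simp add: E_graft2 G_leaf add_ac)
qed

lemma F5: "wf s \<Longrightarrow> Imax (ar s) (\<lambda>t. delta s t - NF s t)"
proof (induction "nv s" arbitrary: s rule: less_induct)
  case less
  show ?case
  proof (cases "left_leaf s")
    case True
    then show ?thesis using op_ideal.zero by (simp add: NF_ll)
  next
    case False
    then obtain b c f where st: "step s b c f" using exists_step less.prems by blast
    have wff: "\<And>d. d \<in> supp (mult b c) \<Longrightarrow> wf (f d)" using wf_step[OF st less.prems(1)] by blast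
    have A: "Imax (ar s) (\<lambda>t. delta s t - lext (\<lambda>d. delta (f d)) (mult b c) t)"
      by (rule step_ideal[OF st less.prems])
    have B: "Imax (ar s) (lext (\<lambda>d t. delta (f d) t - NF (f d) t) (mult b c))"
    proof (rule I_lext)
      fix d assume "d \<in> supp (mult b c)"
      then show "Imax (ar s) (\<lambda>t. delta (f d) t - NF (f d) t)"
        using less.hyps[OF nv_step[OF st]] wff ar_step[OF st] by metis
    qed simp
    have "Imax (ar s) (\<lambda>t. (\<lambda>t. delta s t - lext (\<lambda>d. delta (f d)) (mult b c) t) t + lext (\<lambda>d t. delta (f d) t - NF (f d) t) (mult b c) t)"
      by (rule op_ideal.add[OF A B])
    then show ?thesis by (simp add: lext_diffF Inv[OF st])
  qed
qed

theorem part2: "coset_basis (T n) (Imax n) {t. wf t \<and> left_leaf t}"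
  unfolding coset_basis_def
proof (intro conjI ballI impI)
  fix x assume x: "x \<in> T n" and sx: "supp x \<subseteq> {t. wf t \<and> left_leaf t}" and ix: "Imax n x"
  have "x = lext delta x" using x by (simp add: lext_delta_id T_fin)
  also have "\<dots> = lext NF x"
    by (rule lext_cong) (use sx in \<open>auto simp: NF_ll\<close>)
  also have "\<dots> = (\<lambda>_. 0)" by (rule Phi_kills[OF ix])
  finally show "x = (\<lambda>_. 0)" .
next
  fix x assume x: "x \<in> T n"
  have fx: "finite (supp x)" using x T_fin by blast
  let ?y = "lext NF x"
  have yT: "?y \<in> T n"
  proof (rule T_lext[OF fx])
    fix s assume "s \<in> supp x"
    then have "wf s" "ar s = n" using x by (auto simp: T_iff)
    then show "NF s \<in> T n" using wf_NF by (auto simp: T_iff)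
  qed
  have ys: "supp ?y \<subseteq> {t. wf t \<and> left_leaf t}"
  proof
    fix t assume "t \<in> supp ?y"
    then obtain s where "s \<in> supp x" "t \<in> supp (NF s)" using supp_lext[of NF x] by blast
    then show "t \<in> {t. wf t \<and> left_leaf t}" using x wf_NF ll_NF by (auto simp: T_iff)
  qed
  have "Imax n (lext (\<lambda>s t. delta s t - NF s t) x)"
  proof (rule I_lext[OF fx])
    fix s assume "s \<in> supp x"
    then have "wf s" "ar s = n" using x by (auto simp: T_iff)
    then show "Imax n (\<lambda>t. delta s t - NF s t)" using F5 by metis
  qed
  then have "Imax n (\<lambda>t. x t - ?y t)"
    by (simp add: lext_diffF lext_delta_id fx)
  then show "\<exists>y\<in>T n. supp y \<subseteq> {t. wf t \<and> left_leaf t} \<and> Imax n (\<lambda>t. x t - y t)"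
    using yT ys by blast
qed

end

context wga begin

abbreviation Imin where "Imin \<equiv> I (R_min w one mult)"

fun ev :: "'b tree \<Rightarrow> 'b \<Rightarrow> 'k" where
  "ev Leaf = delta one"
| "ev (Node b []) = (\<lambda>_. 0)"
| "ev (Node b (x # cs)) = (if \<forall>c\<in>set cs. c = Leaf then lext (mult b) (ev x) else (\<lambda>_. 0))"

lemma fin_ev[simp]: "finite (supp (ev t))"
  by (induction t rule: ev.induct) (auto intro!: fin_lext)

lemma mult_one_fun: "mult one = delta" by (rule ext) simp

lemma w_ev: "wf t \<Longrightarrow> z \<in> supp (ev t) \<Longrightarrow> w z + 1 = ar t"
proof (induction t arbitrary: z rule: ev.induct)
  case 1 then show ?case using w0 by simp
next
  case (2 b) then show ?case by simp
next
  case (3 b x cs)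
  then have allL: "\<forall>c\<in>set cs. c = Leaf" by (auto split: if_splits)
  then have "z \<in> supp (lext (mult b) (ev x))" using 3 by simp
  then obtain a where a: "a \<in> supp (ev x)" "z \<in> supp (mult b a)" using supp_lext[of "mult b" "ev x"] by blast
  have "w a + 1 = ar x" using "3.IH" allL a(1) "3.prems"(1) by fastforce
  moreover have "w z = w b + w a" using mult_w[OF a(2)] .
  moreover have "sum_list (map ar cs) = length cs" using allL sum_ar_leaves by blast
  moreover have "length cs = w b" using "3.prems" by simp
  ultimately show ?case by simp
qed

lemma ev_one: "wf u \<Longrightarrow> ev u one = (if u = Leaf then 1 else 0)"
proof (cases "u = Leaf")
  case True then show ?thesis by (simp add: delta_def)
next
  case False
  assume wu: "wf u"
  have "ev u one = 0"
  proof (rule ccontr)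
    assume "ev u one \<noteq> 0"
    then have "one \<in> supp (ev u)" by (simp add: supp_def)
    from w_ev[OF wu this] have "ar u = 1" using w0[of one] by simp
    then show False using wf_ar1[OF wu] False by simp
  qed
  then show ?thesis using False by simp
qed

lemma ev_gen: "ev (gen w one b) = delta b"
  by (simp add: gen_def)

definition C :: "nat \<Rightarrow> ('b \<Rightarrow> 'k) \<Rightarrow> ('b \<Rightarrow> 'k) \<Rightarrow> 'b \<Rightarrow> 'k" where
  "C i X Y = (if i = 0 then lext (\<lambda>a. lext (mult a) Y) X else (\<lambda>z. X z * Y one))"

lemma vassoc: "finite (supp X) \<Longrightarrow> finite (supp Y) \<Longrightarrow>
  lext (mult b) (lext (\<lambda>a. lext (mult a) Y) X) = lext (\<lambda>a. lext (mult a) Y) (lext (mult b) X)"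
proof -
  assume fX: "finite (supp X)" and fY: "finite (supp Y)"
  have "lext (mult b) (lext (\<lambda>a. lext (mult a) Y) X) = lext (\<lambda>a. lext (\<lambda>e. lext (mult b) (mult a e)) Y) X"
    by (simp add: lext_assoc fX fY fin_lext)
  also have "\<dots> = lext (\<lambda>a. lext (\<lambda>e. lext (\<lambda>f. mult f e) (mult b a)) Y) X"
    by (simp add: massoc)
  also have "\<dots> = lext (\<lambda>a. lext (\<lambda>f. lext (mult f) Y) (mult b a)) X"
    by (rule lext_cong, rule lext_swap[OF fY fin_mult])
  also have "\<dots> = lext (\<lambda>a. lext (mult a) Y) (lext (mult b) X)"
    by (simp add: lext_assoc fX)
  finally show ?thesis .
qed

lemma allL_graft: "u \<noteq> Leaf \<Longrightarrow> j < sum_list (map ar cs) \<Longrightarrow> \<not> (\<forall>c\<in>set (graft_list j cs u). c = Leaf)"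
proof -
  assume u: "u \<noteq> Leaf" and j: "j < sum_list (map ar cs)"
  from graft_split[OF j] obtain pre t post k where h: "cs = pre @ t # post" "k < ar t" "j = sum_list (map ar pre) + k"
    by blast
  then have "graft_list j cs u = pre @ graft k t u # post" by (simp add: G_at)
  moreover have "graft k t u \<noteq> Leaf" using graft_not_Leaf[OF u h(2)] .
  ultimately show ?thesis by auto
qed

lemma ev_graft: "wf s \<Longrightarrow> wf u \<Longrightarrow> i < ar s \<Longrightarrow> ev (graft i s u) = C i (ev s) (ev u)"
proof (induction s arbitrary: i)
  case Leaf
  then show ?case by (simp add: C_def mult_one_fun lext_delta_id)
next
  case (Node b ts)
  from Node.prems obtain x cs where ts: "ts = x # cs" by (cases ts) auto
  have wx: "wf x" and lc: "length cs = w b" and wcs: "\<forall>c\<in>set cs. wf c" using Node.prems ts by auto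
  show ?case
  proof (cases "i < ar x")
    case True
    have IH: "ev (graft i x u) = C i (ev x) (ev u)"
      using Node.IH[of x i] ts wx Node.prems(2) True by simp
    show ?thesis
    proof (cases "i = 0")
      case True
      then show ?thesis using IH ts \<open>i < ar x\<close> by (simp add: C_def vassoc)
    next
      case False
      then show ?thesis using IH ts \<open>i < ar x\<close>
        by (simp add: C_def mult.commute[of _ "ev u one"] lext_smult)
    qed
  next
    case False
    have i0: "i \<noteq> 0" using False wf_ar[OF wx] by simp
    have j: "i - ar x < sum_list (map ar cs)" using False Node.prems(3) ts by simp
    show ?thesis
    proof (cases "u = Leaf")
      case True
      then show ?thesis using ts False i0 by (simp add: C_def delta_def)
    next
      case uN: False
      have "ev u one = 0" using ev_one[OF Node.prems(2)] uN by simp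
      have nl: "\<not> (\<forall>c\<in>set (graft_list (i - ar x) cs u). c = Leaf)" using allL_graft[OF uN j] .
      have "graft i (Node b ts) u = Node b (x # graft_list (i - ar x) cs u)" using ts False by simp
      then have "ev (graft i (Node b ts) u) = (\<lambda>_. 0)" using nl by (simp only: ev.simps if_False)
      moreover have "C i (ev (Node b ts)) (ev u) = (\<lambda>_. 0)" using i0 \<open>ev u one = 0\<close> by (simp add: C_def)
      ultimately show ?thesis by simp
    qed
  qed
qed

lemma C_bilin: "finite (supp x) \<Longrightarrow> finite (supp y) \<Longrightarrow>
  lext (\<lambda>s. lext (\<lambda>u. C i (ev s) (ev u)) y) x = C i (lext ev x) (lext ev y)"
proof (cases "i = 0")
  case True
  assume fx: "finite (supp x)" and fy: "finite (supp y)"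
  have "lext (\<lambda>s. lext (\<lambda>u. lext (\<lambda>a. lext (mult a) (ev u)) (ev s)) y) x
      = lext (\<lambda>s. lext (\<lambda>a. lext (\<lambda>u. lext (mult a) (ev u)) y) (ev s)) x"
    by (rule lext_cong, rule lext_swap[OF fy]) simp
  also have "\<dots> = lext (\<lambda>s. lext (\<lambda>a. lext (mult a) (lext ev y)) (ev s)) x"
    by (simp add: lext_assoc fy)
  also have "\<dots> = lext (\<lambda>a. lext (mult a) (lext ev y)) (lext ev x)"
    by (simp add: lext_assoc fx)
  finally show ?thesis using True by (simp add: C_def)
next
  case False
  then show ?thesis
    by (simp add: C_def) (rule ext, simp add: lext_def sum_distrib_left sum_distrib_right, subst sum.swap, simp add: algebra_simps)
qed

lemma ev_lcomp: "x \<in> T n \<Longrightarrow> y \<in> T m \<Longrightarrow> i < n \<Longrightarrow> lext ev (lcomp i x y) = C i (lext ev x) (lext ev y)"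
proof -
  assume x: "x \<in> T n" and y: "y \<in> T m" and i: "i < n"
  have fx: "finite (supp x)" and fy: "finite (supp y)" using x y T_fin by auto
  have "lext ev (lcomp i x y) = lext (\<lambda>s. lext (\<lambda>u. ev (graft i s u)) y) x"
    by (rule lext_lcomp[OF fx fy])
  also have "\<dots> = lext (\<lambda>s. lext (\<lambda>u. C i (ev s) (ev u)) y) x"
  proof (rule lext_cong, rule lext_cong)
    fix s u assume "s \<in> supp x" "u \<in> supp y"
    then have "wf s" "ar s = n" "wf u" using x y by (auto simp: T_iff)
    then show "ev (graft i s u) = C i (ev s) (ev u)" using ev_graft i by simp
  qed
  also have "\<dots> = C i (lext ev x) (lext ev y)" by (rule C_bilin[OF fx fy])
  finally show ?thesis .
qed

lemma genv_T: "a \<in> Acomp w p \<Longrightarrow> genv w one a \<in> T (Suc p)"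
  unfolding genv_lext
proof (rule T_lext)
  assume a: "a \<in> Acomp w p"
  then show "finite (supp a)" by (simp add: Acomp_def)
  fix b assume "b \<in> supp a"
  then have "ar (gen w one b) = Suc p" using a by (simp add: Acomp_def ar_gen)
  then show "delta (gen w one b) \<in> T (Suc p)" using T_delta[OF gen_wf[of b]] by simp
qed

lemma ev_genv: "finite (supp a) \<Longrightarrow> lext ev (genv w one a) = a"
  by (simp add: genv_lext lext_assoc ev_gen lext_delta_id)

lemma Phi_min_kills: "Imin n x \<Longrightarrow> lext ev x = (\<lambda>_. 0)"
proof (induction rule: op_ideal.induct)
  case (gen n x)
  from gen.hyps(1) show ?case unfolding R_min_def
  proof (elim disjE)
    assume "R_max w one mult n x"
    then obtain p q a1 a2 where h: "a1 \<in> Acomp w p" "a2 \<in> Acomp w q"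
      "x = (\<lambda>t. lcomp 0 (genv w one a1) (genv w one a2) t - genv w one (mulv mult a1 a2) t)"
      unfolding R_max_def by blast
    have f1: "finite (supp a1)" and f2: "finite (supp a2)" using h Acomp_fin by auto
    have "lext ev (lcomp 0 (genv w one a1) (genv w one a2)) = mulv mult a1 a2"
      using ev_lcomp[OF genv_T[OF h(1)] genv_T[OF h(2)]] by (simp add: ev_genv f1 f2 C_def mulv_lext)
    then show ?thesis using h(3)
      by (simp add: lext_diff fin_lcomp fin_genv fin_mulv f1 f2 ev_genv)
  next
    assume "\<exists>p q a1 a2 i. a1 \<in> Acomp w p \<and> a2 \<in> Acomp w q \<and> 1 \<le> q \<and> 1 \<le> i \<and> i \<le> p \<and>
        n = p + q + 1 \<and> x = lcomp i (genv w one a1) (genv w one a2)"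
    then obtain p q a1 a2 i where h: "a1 \<in> Acomp w p" "a2 \<in> Acomp w q" "1 \<le> q" "1 \<le> i" "i \<le> p"
        "x = lcomp i (genv w one a1) (genv w one a2)" by blast
    have f1: "finite (supp a1)" and f2: "finite (supp a2)" using h Acomp_fin by auto
    have "a2 one = 0"
    proof (rule ccontr)
      assume "a2 one \<noteq> 0"
      then have "w one = q" using h(2) by (auto simp: Acomp_def supp_def)
      then show False using h(3) w0[of one] by simp
    qed
    moreover have "i < Suc p" using h(5) by simp
    ultimately show ?thesis
      using ev_lcomp[OF genv_T[OF h(1)] genv_T[OF h(2)]] h by (simp add: ev_genv f1 f2 C_def)
  qed
next
  case (zero n) then show ?case by simp
next
  case (add n x y)
  then show ?case using I_T[OF add.hyps(1)] I_T[OF add.hyps(2)] by (simp add: lext_add T_fin)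
next
  case (smult n x c)
  then show ?case by (simp add: lext_smult)
next
  case (left n x y m i)
  then show ?case using ev_lcomp[OF I_T[OF left.hyps(1)] left.hyps(2,3)] by (simp add: C_def)
next
  case (right m x y n i)
  then show ?case using ev_lcomp[OF right.hyps(2) I_T[OF right.hyps(1)] right.hyps(3)]
    by (simp add: C_def)
qed

end

context wga begin

lemma ev_step: "step s b c f \<Longrightarrow> ev s = lext (\<lambda>d. ev (f d)) (mult b c)"
proof (induction rule: step.induct)
  case (root b c x us cs)
  show ?case
  proof (cases "(\<forall>t\<in>set us. t = Leaf) \<and> (\<forall>t\<in>set cs. t = Leaf)")
    case True
    have "lext (mult b) (lext (mult c) (ev x)) = lext (\<lambda>a. lext (mult b) (mult c a)) (ev x)"
      by (simp add: lext_assoc)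
    also have "\<dots> = lext (\<lambda>a. lext (\<lambda>d. mult d a) (mult b c)) (ev x)"
      by (simp add: massoc)
    also have "\<dots> = lext (\<lambda>d. lext (mult d) (ev x)) (mult b c)"
      by (rule lext_swap) auto
    finally show ?thesis using True by (simp add: ball_Un)
  next
    case False
    have nc: "\<not> (\<forall>c\<in>set (us @ cs). c = Leaf)" using False by auto
    have r: "lext (\<lambda>d. ev (Node d (x # us @ cs))) (mult b c) = (\<lambda>_. 0)"
      using nc by (simp only: ev.simps if_False lext_zeroF)
    have l: "ev (Node b (Node c (x # us) # cs)) = (\<lambda>_. 0)" using False by auto
    show ?thesis using l r by simp
  qed
next
  case (child t b c g a pre post)
  show ?case
  proof (cases pre)
    case Nil
    show ?thesis
    proof (cases "\<forall>t\<in>set post. t = Leaf")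
      case True
      then show ?thesis using Nil child.IH by (simp add: lext_assoc)
    next
      case False
      then show ?thesis using Nil by (simp only: append_Nil ev.simps if_False lext_zeroF)
    qed
  next
    case (Cons x pre')
    have "t \<noteq> Leaf" using step_Node[OF child.hyps] by auto
    moreover have "g d \<noteq> Leaf" for d using step_f_Node[OF child.hyps, of d] by auto
    ultimately show ?thesis using Cons by simp
  qed
qed

lemma lcomp_diff1: "finite (supp x) \<Longrightarrow> finite (supp x') \<Longrightarrow> finite (supp y) \<Longrightarrow>
  lcomp k (\<lambda>t. x t - x' t) y = (\<lambda>t. lcomp k x y t - lcomp k x' (y :: _ \<Rightarrow> 'k) t)"
  by (simp add: lcomp_lext lext_diff)

lemma lcomp_diff2: "finite (supp x) \<Longrightarrow> finite (supp y) \<Longrightarrow> finite (supp y') \<Longrightarrow>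
  lcomp k x (\<lambda>t. y t - y' t) = (\<lambda>t. lcomp k x y t - lcomp k x (y' :: _ \<Rightarrow> 'k) t)"
  by (simp add: lcomp_lext lext_diff lext_diffF)

lemma ev_Acomp: "wf t \<Longrightarrow> ev t \<in> Acomp w (ar t - 1)"
  using w_ev by (fastforce simp: Acomp_def)

lemma genv_diff_lext: "finite (supp m) \<Longrightarrow> (\<And>d. finite (supp (F d))) \<Longrightarrow>
   genv w one (lext F m) = lext (\<lambda>d. genv w one (F d)) (m :: _ \<Rightarrow> 'k)"
  by (simp add: genv_lext lext_assoc)

lemma Kmin: "wf t \<Longrightarrow> Imin (ar t) (\<lambda>z. delta t z - genv w one (ev t) z)"
proof (induction "nv t" arbitrary: t rule: less_induct)
  case less
  show ?case
  proof (cases "left_leaf t")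
    case False
    then obtain b c f where st: "step t b c f" using exists_step less.prems by blast
    have wff: "\<And>d. d \<in> supp (mult b c) \<Longrightarrow> wf (f d)" using wf_step[OF st less.prems(1)] by blast
    have A: "Imin (ar t) (\<lambda>z. delta t z - lext (\<lambda>d. delta (f d)) (mult b c) z)"
      by (rule I_mono[OF step_ideal[OF st less.prems]]) (simp add: R_min_def)
    have B: "Imin (ar t) (lext (\<lambda>d z. delta (f d) z - genv w one (ev (f d)) z) (mult b c))"
    proof (rule I_lext)
      fix d assume "d \<in> supp (mult b c)"
      then show "Imin (ar t) (\<lambda>z. delta (f d) z - genv w one (ev (f d)) z)"
        using less.hyps[OF nv_step[OF st]] wff ar_step[OF st] by metis
    qed simp
    have "Imin (ar t) (\<lambda>z. (\<lambda>z. delta t z - lext (\<lambda>d. delta (f d)) (mult b c) z) z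
       + lext (\<lambda>d z. delta (f d) z - genv w one (ev (f d)) z) (mult b c) z)"
      by (rule op_ideal.add[OF A B])
    moreover have "genv w one (ev t) = lext (\<lambda>d. genv w one (ev (f d))) (mult b c)"
      by (simp add: ev_step[OF st] genv_diff_lext)
    ultimately show ?thesis by (simp add: lext_diffF)
  next
    case llt: True
    show ?thesis
    proof (cases t)
      case Leaf
      then show ?thesis using op_ideal.zero by (simp add: genv_lext gen_def)
    next
      case (Node b ts)
      with llt obtain cs where ts: "ts = Leaf # cs" by (cases ts) auto
      have wb: "b \<noteq> one" "length cs = w b" "\<forall>c\<in>set cs. wf c" using less.prems Node ts by auto
      show ?thesis
      proof (cases "\<forall>c\<in>set cs. c = Leaf")
        case True
        then have "cs = replicate (w b) Leaf" using all_leaf_replicate wb by metis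
        then have "t = gen w one b" using Node ts wb by (simp add: gen_def)
        moreover have "ev (gen w one b) = delta b" by (rule ev_gen)
        ultimately show ?thesis using op_ideal.zero by (simp add: genv_lext)
      next
        case False
        then obtain pre z post where sp: "cs = pre @ z # post" "z \<noteq> Leaf"
          by (metis split_list)
        let ?t' = "Node b (Leaf # pre @ Leaf # post)"
        let ?k = "sum_list (map ar (Leaf # pre))"
        have wz: "wf z" using wb sp by auto
        have wt': "wf ?t'" using wb sp by auto
        have k: "?k < ar ?t'" by simp
        have k1: "1 \<le> ?k" by simp
        have ev0: "ev t = (\<lambda>_. 0)" using False by (simp only: Node ts ev.simps if_False)
        have et: "graft ?k ?t' z = t" using Node ts sp G_leaf[of "Leaf # pre" post z] by simp
        have et': "graft (Suc (sum_list (map ar pre))) ?t' z = t" using et by simp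
        have IH1: "Imin (ar ?t') (\<lambda>y. delta ?t' y - genv w one (ev ?t') y)"
          using less.hyps[of ?t'] wt' Node ts sp nv_pos[OF sp(2)] by simp
        have IH2: "Imin (ar z) (\<lambda>y. delta z y - genv w one (ev z) y)"
          using less.hyps[of z] wz Node ts sp by simp
        define G1 where "G1 = genv w one (ev ?t')"
        define G2 where "G2 = genv w one (ev z)"
        have G1T: "G1 \<in> T (ar ?t')"
          using genv_T[OF ev_Acomp[OF wt']] wf_ar[OF wt'] unfolding G1_def by simp
        have fG1: "finite (supp G1)" and fG2: "finite (supp G2)"
          by (simp_all add: G1_def G2_def fin_genv)
        have arz: "2 \<le> ar z" using wz sp(2) wf_ar_Node by (cases z) auto
        have art: "ar t = ar ?t' + ar z - 1" using et ar_graft[OF k, of z] by simp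
        have L1: "Imin (ar t) (lcomp ?k (\<lambda>y. delta ?t' y - G1 y) (delta z))"
          using op_ideal.left[OF IH1[folded G1_def] T_delta[OF wz] k] art by simp
        have L2: "Imin (ar t) (lcomp ?k G1 (\<lambda>y. delta z y - G2 y))"
          using op_ideal.right[OF IH2[folded G2_def] G1T k] art by (simp add: add.commute)
        have R3: "R_min w one mult (ar t) (lcomp ?k G1 G2)"
          unfolding R_min_def
        proof (rule disjI2, intro exI conjI)
          show "ev ?t' \<in> Acomp w (ar ?t' - 1)" by (rule ev_Acomp[OF wt'])
          show "ev z \<in> Acomp w (ar z - 1)" by (rule ev_Acomp[OF wz])
          show "1 \<le> ar z - 1" using arz by simp
          show "1 \<le> ?k" by simp
          show "?k \<le> ar ?t' - 1" by simp
          show "ar t = ar ?t' - 1 + (ar z - 1) + 1" using art arz wf_ar[OF wt'] by simp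
          show "lcomp ?k G1 G2 = lcomp ?k (genv w one (ev ?t')) (genv w one (ev z))"
            by (simp add: G1_def G2_def)
        qed
        have L3: "Imin (ar t) (lcomp ?k G1 G2)"
        proof (rule op_ideal.gen[where w=w and one=one and R="R_min w one mult", OF R3])
          have "G2 \<in> T (ar z)"
            using genv_T[OF ev_Acomp[OF wz]] wf_ar[OF wz] unfolding G2_def by simp
          from T_lcomp[OF G1T this k] show "lcomp ?k G1 G2 \<in> Tcomp w one (ar t)" using art by simp
        qed
        have "Imin (ar t) (\<lambda>y. (\<lambda>y. lcomp ?k (\<lambda>y. delta ?t' y - G1 y) (delta z) y
                 + lcomp ?k G1 (\<lambda>y. delta z y - G2 y) y) y + lcomp ?k G1 G2 y)"
          by (intro op_ideal.add L1 L2 L3)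
        moreover have "(\<lambda>y. (\<lambda>y. lcomp ?k (\<lambda>y. delta ?t' y - G1 y) (delta z) y
                 + lcomp ?k G1 (\<lambda>y. delta z y - G2 y) y) y + lcomp ?k G1 G2 y) = delta t"
          by (simp add: lcomp_diff1 lcomp_diff2 fG1 fG2 lcomp_delta et' del: graft.simps graft_list.simps)
        ultimately show ?thesis using ev0 by (simp add: genv_lext)
      qed
    qed
  qed
qed

theorem part1: "quotient_iso (T n) (Imin n) (Aplus w n :: ('b \<Rightarrow> 'k) set)"
  unfolding quotient_iso_def
proof (intro exI[of _ "lext ev"] conjI ballI allI)
  fix x y assume "x \<in> T n" "y \<in> T n"
  then show "lext ev (\<lambda>t. x t + y t) = (\<lambda>b. lext ev x b + lext ev y b)"
    by (simp add: lext_add T_fin)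
next
  fix c x show "lext ev (\<lambda>t. c * x t) = (\<lambda>b. c * lext ev x b)" by (rule lext_smult)
next
  show "lext ev ` T n = Aplus w n"
  proof (cases "n = 0")
    case True
    have "T 0 = {\<lambda>_. 0}"
    proof
      show "T 0 \<subseteq> {\<lambda>_. 0}"
      proof
        fix x assume x: "x \<in> T 0"
        have "supp x = {}"
        proof (rule ccontr)
          assume "supp x \<noteq> {}"
          then obtain t where "t \<in> supp x" by blast
          then have "wf t" "ar t = 0" using x by (auto simp: T_iff)
          then show False using wf_ar by fastforce
        qed
        then show "x \<in> {\<lambda>_. 0}" by (auto simp: supp_def)
      qed
    qed (simp add: T_zero)
    then show ?thesis using True by (simp add: Aplus_def)
  next
    case False
    have "lext ev ` T n \<subseteq> Acomp w (n - 1)"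
    proof
      fix y assume "y \<in> lext ev ` T n"
      then obtain x where x: "x \<in> T n" "y = lext ev x" by blast
      have "finite (supp y)" using x by (simp add: T_fin fin_lext)
      moreover have "\<forall>z\<in>supp y. w z = n - 1"
      proof
        fix z assume "z \<in> supp y"
        then obtain s where "s \<in> supp x" "z \<in> supp (ev s)" using supp_lext[of ev x] x(2) by blast
        then show "w z = n - 1" using w_ev x(1) by (fastforce simp: T_iff)
      qed
      ultimately show "y \<in> Acomp w (n - 1)" by (simp add: Acomp_def)
    qed
    moreover have "Acomp w (n - 1) \<subseteq> lext ev ` T n"
    proof
      fix a :: "'b \<Rightarrow> 'k" assume a: "a \<in> Acomp w (n - 1)"
      have "genv w one a \<in> T n" using genv_T[OF a] False by simp
      moreover have "lext ev (genv w one a) = a" using a by (simp add: ev_genv Acomp_fin)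
      ultimately show "a \<in> lext ev ` T n" by (metis image_eqI)
    qed
    ultimately show ?thesis using False by (simp add: Aplus_def)
  qed
next
  fix x assume x: "x \<in> T n"
  show "lext ev x = (\<lambda>_. 0) \<longleftrightarrow> Imin n x"
  proof
    assume "Imin n x" then show "lext ev x = (\<lambda>_. 0)" by (rule Phi_min_kills)
  next
    assume e: "lext ev x = (\<lambda>_. 0)"
    have fx: "finite (supp x)" using x T_fin by blast
    have "Imin n (lext (\<lambda>s z. delta s z - genv w one (ev s) z) x)"
    proof (rule I_lext[OF fx])
      fix s assume "s \<in> supp x"
      then have "wf s" "ar s = n" using x by (auto simp: T_iff)
      then show "Imin n (\<lambda>z. delta s z - genv w one (ev s) z)" using Kmin by metis
    qed
    moreover have "lext (\<lambda>s z. delta s z - genv w one (ev s) z) x = x"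
    proof -
      have "lext (\<lambda>s. genv w one (ev s)) x = genv w one (lext ev x)"
        by (simp add: genv_diff_lext fx)
      then have "lext (\<lambda>s. genv w one (ev s)) x = (\<lambda>_. 0)" using e by (simp add: genv_lext)
      then show ?thesis by (simp add: lext_diffF lext_delta_id fx)
    qed
    ultimately show "Imin n x" by simp
  qed
qed

end

theorem theorem2p3:
  fixes w :: "'b \<Rightarrow> nat" and one :: 'b and mult :: "'b \<Rightarrow> 'b \<Rightarrow> 'b \<Rightarrow> 'k::field"
  assumes "wg_algebra w one mult"
  shows "(\<forall>n. quotient_iso (Tcomp w one n) (op_ideal w one (R_min w one mult) n)
                 (Aplus w n :: ('b \<Rightarrow> 'k) set))
       \<and> (\<forall>n. coset_basis (Tcomp w one n :: ('b tree \<Rightarrow> 'k) set)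
                 (op_ideal w one (R_max w one mult) n)
                 {t. wf_tree w one t \<and> left_leaf t})"
proof -
  interpret wga w one mult by unfold_locales (rule assms)
  show ?thesis using part1 part2 by blast
qed

end
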